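(* Let $(X_k)_{k\ge1}$ be i.i.d. real random variables with $E X_1=0$ and $E|X_1|^{\beta}<\infty$ for some $\beta>1$, let $S_0=0$, $S_n=X_1+\dots+X_n$, and for fixed $\mu>0$ let $S_n(\mu)=S_n-n\mu$. Fix $m>0$ and $L\ge1$ such that $P(m<M_0\le (L+1)m)>0$, where $M_0=\sup_{n\ge0}S_n(\mu)$. Set $D_0=0$, $D_1=\inf\{n\ge 0: S_n(\mu)<-Lm\}$, $U_1=\inf\{n\ge D_1: S_n(\mu)>m+S_{D_1}(\mu)\}$, and for $j\ge2$ $$D_j=\inf\{n\ge U_{j-1}\mathbf 1(U_{j-1}<\infty)\vee D_{j-1}: S_n(\mu)<S_{D_{j-1}}(\mu)-Lm\},\qquad U_j=\inf\{n\ge D_j: S_n(\mu)-S_{D_j}(\mu)>m\},$$ with the convention $U_{j-1}\mathbf 1(U_{j-1}<\infty)=0$ when $U_{j-1}=\infty$ (and $\inf\emptyset=\infty$). Then, under $P_0$ (the walk started at $S_0=0$), $$P_0\Big(\lim_{n\to\infty}D_n=\infty\Big)=1,\qquad P_0(D_n<\infty)=1\ \text{ for all } n\ge1,$$ and $$P_0(U_n=\infty\ \text{for infinitely many } n)=1.$$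
   Context: $P_a$ denotes the law of the random walk started at $S_0=a$. *)

theory Defs
  imports "HOL-Probability.Probability"
begin

definition Sdrift :: "(nat \<Rightarrow> 'a \<Rightarrow> real) \<Rightarrow> real \<Rightarrow> nat \<Rightarrow> 'a \<Rightarrow> real" where
  "Sdrift X \<mu> n \<omega> = (\<Sum>k\<in>{1..n}. X k \<omega>) - real n * \<mu>"

definition Msup :: "(nat \<Rightarrow> 'a \<Rightarrow> real) \<Rightarrow> real \<Rightarrow> 'a \<Rightarrow> ereal" where
  "Msup X \<mu> \<omega> = (SUP n. ereal (Sdrift X \<mu> n \<omega>))"

definition hit :: "nat \<Rightarrow> (nat \<Rightarrow> bool) \<Rightarrow> enat" where
  "hit a P = (if \<exists>n\<ge>a. P n then enat (LEAST n. a \<le> n \<and> P n) else \<infinity>)"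

text \<open>DU s L m j = (D_j, U_j) for the path s (s n = S_n(mu)).
  D_0 = 0; U_0 is an unused dummy value. For D_{j-1} = \<infinity> the infimum is over
  an empty set, so D_j = \<infinity>; likewise U_j = \<infinity> if D_j = \<infinity>.\<close>
fun DU :: "(nat \<Rightarrow> real) \<Rightarrow> real \<Rightarrow> real \<Rightarrow> nat \<Rightarrow> enat \<times> enat" where
  "DU s L m 0 = (0, \<infinity>)"
| "DU s L m (Suc j) =
     (let d = fst (DU s L m j); u = snd (DU s L m j);
          d' = (if j = 0 then hit 0 (\<lambda>n. s n < - L * m)
                else (case d of
                        \<infinity> \<Rightarrow> \<infinity>
                      | enat k \<Rightarrow> hit (max (if u < \<infinity> then the_enat u else 0) k)
                                      (\<lambda>n. s n < s k - L * m)));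
          u' = (case d' of \<infinity> \<Rightarrow> \<infinity> | enat k \<Rightarrow> hit k (\<lambda>n. s n - s k > m))
      in (d', u'))"

definition Dtime :: "(nat \<Rightarrow> real) \<Rightarrow> real \<Rightarrow> real \<Rightarrow> nat \<Rightarrow> enat" where
  "Dtime s L m j = fst (DU s L m j)"

definition Utime :: "(nat \<Rightarrow> real) \<Rightarrow> real \<Rightarrow> real \<Rightarrow> nat \<Rightarrow> enat" where
  "Utime s L m j = snd (DU s L m j)"

end

theory Submission
  imports Defs
begin

lemma hit_enatD:
  assumes "hit a P = enat v" shows "a \<le> v" "P v" "\<And>n. a \<le> n \<Longrightarrow> n < v \<Longrightarrow> \<not> P n"
proof -
  have ex: "\<exists>n\<ge>a. P n" using assms by (auto simp: hit_def split: if_splits)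
  have v: "v = (LEAST n. a \<le> n \<and> P n)" using assms ex by (auto simp: hit_def)
  from ex obtain n0 where "a \<le> n0 \<and> P n0" by auto
  then have "a \<le> v \<and> P v" unfolding v by (rule LeastI)
  then show "a \<le> v" "P v" by auto
  show "\<And>n. a \<le> n \<Longrightarrow> n < v \<Longrightarrow> \<not> P n" unfolding v using not_less_Least by blast
qed

lemma hit_infD: "hit a P = \<infinity> \<Longrightarrow> a \<le> n \<Longrightarrow> \<not> P n"
  by (auto simp: hit_def split: if_splits)

lemma hit_finI: "a \<le> n \<Longrightarrow> P n \<Longrightarrow> \<exists>v. hit a P = enat v"
  by (auto simp: hit_def)

lemma hit_local:
  assumes "hit a P = enat v" "\<And>n. n \<le> v \<Longrightarrow> P n = Q n"
  shows "hit a Q = enat v"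
proof -
  note h = hit_enatD[OF assms(1)]
  have "a \<le> v \<and> Q v" using h assms(2) by auto
  moreover have "\<And>n. a \<le> n \<and> Q n \<Longrightarrow> v \<le> n"
    using h(3) assms(2) by (metis linorder_not_le order_less_imp_le)
  ultimately have "(LEAST n. a \<le> n \<and> Q n) = v" by (intro Least_equality) auto
  then show ?thesis using \<open>a \<le> v \<and> Q v\<close> by (auto simp: hit_def)
qed

definition step :: "(nat \<Rightarrow> real) \<Rightarrow> real \<Rightarrow> real \<Rightarrow> nat \<Rightarrow> nat option" where
  "step s L m e = (case hit e (\<lambda>n. s n - s e > m) of \<infinity> \<Rightarrow> None
     | enat u \<Rightarrow> (case hit u (\<lambda>n. s n < s e - L * m) of \<infinity> \<Rightarrow> None | enat e' \<Rightarrow> Some e'))"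

fun chain :: "(nat \<Rightarrow> real) \<Rightarrow> real \<Rightarrow> real \<Rightarrow> nat \<Rightarrow> nat \<Rightarrow> nat option" where
  "chain s L m d 0 = Some d"
| "chain s L m d (Suc i) = Option.bind (chain s L m d i) (step s L m)"

lemma step_SomeD:
  assumes "step s L m e = Some e'"
  obtains u where "hit e (\<lambda>n. s n - s e > m) = enat u" "hit u (\<lambda>n. s n < s e - L * m) = enat e'"
  using assms by (auto simp: step_def split: enat.splits)

lemma step_ge: assumes "step s L m e = Some e'" shows "e \<le> e'"
proof -
  obtain u where u: "hit e (\<lambda>n. s n - s e > m) = enat u" and e': "hit u (\<lambda>n. s n < s e - L * m) = enat e'"
    using assms by (rule step_SomeD)
  show ?thesis using hit_enatD(1)[OF u] hit_enatD(1)[OF e'] by simp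
qed

lemma step_local:
  assumes "step s L m e = Some e'" "\<And>n. n \<le> e' \<Longrightarrow> s n = t n"
  shows "step t L m e = Some e'"
proof -
  obtain u where u: "hit e (\<lambda>n. s n - s e > m) = enat u" and e': "hit u (\<lambda>n. s n < s e - L * m) = enat e'"
    using assms(1) by (rule step_SomeD)
  have eu: "e \<le> u" "u \<le> e'" using hit_enatD(1)[OF u] hit_enatD(1)[OF e'] by auto
  have se: "s e = t e" using assms(2) eu by auto
  have "hit e (\<lambda>n. t n - t e > m) = enat u"
    by (rule hit_local[OF u]) (use assms(2) eu se in auto)
  moreover have "hit u (\<lambda>n. t n < t e - L * m) = enat e'"
    by (rule hit_local[OF e']) (use assms(2) eu se in auto)
  ultimately show ?thesis by (simp add: step_def)
qed

lemma chain_ge: "chain s L m d i = Some e \<Longrightarrow> d \<le> e"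
proof (induction i arbitrary: e)
  case 0 then show ?case by simp
next
  case (Suc i)
  then obtain e0 where "chain s L m d i = Some e0" "step s L m e0 = Some e" by (auto split: Option.bind_splits)
  then show ?case using Suc.IH step_ge by fastforce
qed

lemma chain_local:
  assumes "chain s L m d i = Some e" "\<And>n. n \<le> e \<Longrightarrow> s n = t n"
  shows "chain t L m d i = Some e"
  using assms
proof (induction i arbitrary: e)
  case 0 then show ?case by simp
next
  case (Suc i)
  then obtain e0 where c: "chain s L m d i = Some e0" and st: "step s L m e0 = Some e" by (auto split: Option.bind_splits)
  have "e0 \<le> e" using step_ge[OF st] .
  then have "chain t L m d i = Some e0" using Suc.IH[OF c] Suc.prems(2) by auto
  moreover have "step t L m e0 = Some e" using step_local[OF st] Suc.prems(2) by auto
  ultimately show ?case by simp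
qed

lemma DU_Suc_D: "j \<noteq> 0 \<Longrightarrow> Dtime s L m (Suc j) = (case Dtime s L m j of \<infinity> \<Rightarrow> \<infinity>
   | enat k \<Rightarrow> hit (max (if Utime s L m j < \<infinity> then the_enat (Utime s L m j) else 0) k) (\<lambda>n. s n < s k - L * m))"
  unfolding Utime_def Dtime_def by (simp only: DU.simps Let_def fst_conv snd_conv if_False)
lemma DU_Suc_U: "Utime s L m (Suc j) = (case Dtime s L m (Suc j) of \<infinity> \<Rightarrow> \<infinity> | enat k \<Rightarrow> hit k (\<lambda>n. s n - s k > m))"
  unfolding Utime_def Dtime_def by (simp only: DU.simps Let_def fst_conv snd_conv)

lemma DU_Suc_D1: "Dtime s L m (Suc 0) = hit 0 (\<lambda>n. s n < - L * m)"
  by (simp add: Dtime_def Let_def)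

lemma U_fin_D_fin:
  assumes "j \<noteq> 0" "Utime s L m j \<noteq> \<infinity>" shows "\<exists>k. Dtime s L m j = enat k"
proof -
  obtain i where j: "j = Suc i" using assms(1) by (cases j) auto
  show ?thesis
  proof (cases "Dtime s L m j")
    case infinity
    then have "Utime s L m j = \<infinity>" unfolding j DU_Suc_U by simp
    then show ?thesis using assms by simp
  qed auto
qed

lemma chain_DU:
  assumes J: "J \<noteq> 0" and D: "Dtime s L m J = enat d" and U: "\<forall>j\<ge>J. Utime s L m j \<noteq> \<infinity>"
  shows "\<exists>e. Dtime s L m (J + K) = enat e \<and> chain s L m d K = Some e"
proof (induction K)
  case 0 then show ?case using D by simp
next
  case (Suc K)
  then obtain e where e: "Dtime s L m (J + K) = enat e" "chain s L m d K = Some e" by auto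
  obtain j where j: "J + K = Suc j" using J by (cases "J + K") auto
  have "Utime s L m (J + K) \<noteq> \<infinity>" using U by auto
  moreover have "Utime s L m (J + K) = hit e (\<lambda>n. s n - s e > m)"
    using e(1) unfolding j DU_Suc_U by simp
  ultimately obtain u where u: "hit e (\<lambda>n. s n - s e > m) = enat u"
    by (cases "hit e (\<lambda>n. s n - s e > m)") auto
  have eu: "e \<le> u" using hit_enatD(1)[OF u] .
  have "Utime s L m (Suc (J + K)) \<noteq> \<infinity>" using U by auto
  then obtain e' where e': "Dtime s L m (Suc (J + K)) = enat e'"
    using U_fin_D_fin by blast
  have "Utime s L m (J + K) = enat u" using \<open>Utime s L m (J + K) = hit e (\<lambda>n. s n - s e > m)\<close> u by simp
  then have "Dtime s L m (Suc (J + K)) = hit u (\<lambda>n. s n < s e - L * m)"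
    using e(1) eu J by (subst DU_Suc_D) (auto simp: max_def)
  then have "hit u (\<lambda>n. s n < s e - L * m) = enat e'" using e' by simp
  then have "step s L m e = Some e'" using u by (simp add: step_def)
  then show ?case using e e' by auto
qed


lemma D_step:
  assumes s0: "s 0 = 0" and Lm: "L * m > 0" and down: "\<And>c a. \<exists>n\<ge>a. s n < c"
  shows "\<exists>k. Dtime s L m (Suc j) = enat k \<and> Dtime s L m j < enat k"
proof (induction j)
  case 0
  obtain n where n: "n \<ge> 0" "s n < - L * m" using down by blast
  then obtain v where v: "hit 0 (\<lambda>n. s n < - L * m) = enat v" using hit_finI[of 0 n "\<lambda>n. s n < - L * m"] by blast
  have "s v < - L * m" using hit_enatD(2)[OF v] .
  have "v \<noteq> 0"
  proof
    assume "v = 0" then show False using \<open>s v < - L * m\<close> s0 Lm by simp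
  qed
  moreover have "Dtime s L m 0 = 0" by (simp add: Dtime_def)
  ultimately show ?case using v by (auto simp: DU_Suc_D1 zero_enat_def)
next
  case (Suc j)
  then obtain k where k: "Dtime s L m (Suc j) = enat k" by auto
  define a where "a = max (if Utime s L m (Suc j) < \<infinity> then the_enat (Utime s L m (Suc j)) else 0) k"
  have D: "Dtime s L m (Suc (Suc j)) = hit a (\<lambda>n. s n < s k - L * m)"
    using k by (subst DU_Suc_D) (auto simp: a_def)
  obtain n where "n \<ge> a" "s n < s k - L * m" using down by blast
  then obtain v where v: "hit a (\<lambda>n. s n < s k - L * m) = enat v" using hit_finI[of a n "\<lambda>n. s n < s k - L * m"] by blast
  have "a \<le> v" "s v < s k - L * m" using hit_enatD[OF v] by auto
  moreover have "k \<le> a" by (simp add: a_def)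
  ultimately have "k \<le> v" by simp
  moreover have "k \<noteq> v" using \<open>s v < s k - L * m\<close> Lm by auto
  ultimately have "k < v" by simp
  then show ?case using D v k by auto
qed

lemma D_tendsto:
  assumes s0: "s 0 = 0" and Lm: "L * m > 0" and down: "\<And>c a. \<exists>n\<ge>a. s n < c"
  shows "(\<lambda>n. Dtime s L m n) \<longlonglongrightarrow> \<infinity>"
proof -
  have ge: "enat n \<le> Dtime s L m n" for n
  proof (induction n)
    case 0 then show ?case by (simp add: Dtime_def zero_enat_def[symmetric])
  next
    case (Suc n)
    obtain k where "Dtime s L m (Suc n) = enat k" "Dtime s L m n < enat k"
      using D_step[OF s0 Lm down] by blast
    then have "enat n < enat k" using Suc.IH by (rule_tac order.strict_trans1) auto
    then have "enat (Suc n) \<le> enat k" by simp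
    then show ?case using \<open>Dtime s L m (Suc n) = enat k\<close> by simp
  qed
  show ?thesis
  proof (rule order_tendstoI)
    fix a :: enat assume "a < \<infinity>"
    then obtain k where a: "a = enat k" by (cases a) auto
    have "enat k < Dtime s L m n" if "n \<ge> Suc k" for n
    proof -
      have "enat k < enat n" using that by simp
      also have "\<dots> \<le> Dtime s L m n" by (rule ge)
      finally show ?thesis .
    qed
    then show "eventually (\<lambda>n. a < Dtime s L m n) sequentially"
      unfolding eventually_sequentially a by blast
  qed simp
qed

lemma meas_hit:
  assumes [measurable]: "\<And>n. Measurable.pred N (\<lambda>x. P x n)"
  shows "(\<lambda>x. hit a (P x)) \<in> measurable N (count_space UNIV)"
  unfolding hit_def by measurable

lemma meas_step:
  assumes [measurable]: "\<And>k. (\<lambda>x. f x k) \<in> borel_measurable N"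
  shows "(\<lambda>x. step (f x) L m e) \<in> measurable N (count_space UNIV)"
proof -
  define G where "G h x = (case h of \<infinity> \<Rightarrow> None
     | enat u \<Rightarrow> (case hit u (\<lambda>n. f x n < f x e - L * m) of \<infinity> \<Rightarrow> None | enat e' \<Rightarrow> Some e'))" for h x
  have eq: "step (f x) L m e = G (hit e (\<lambda>n. f x n - f x e > m)) x" for x
    by (simp add: step_def G_def)
  have "(\<lambda>x. G h x) \<in> measurable N (count_space UNIV)" for h
  proof (cases h)
    case (enat u)
    have "(\<lambda>x. hit u (\<lambda>n. f x n < f x e - L * m)) \<in> measurable N (count_space UNIV)"
      by (rule meas_hit) measurable
    then have "(\<lambda>x. (\<lambda>v. case v of \<infinity> \<Rightarrow> None | enat e' \<Rightarrow> Some e') (hit u (\<lambda>n. f x n < f x e - L * m)))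
       \<in> measurable N (count_space UNIV)"
      by (rule measurable_compose) (rule measurable_count_space)
    then show ?thesis by (simp add: G_def enat)
  qed (simp add: G_def)
  moreover have "(\<lambda>x. hit e (\<lambda>n. f x n - f x e > m)) \<in> measurable N (count_space UNIV)"
    by (rule meas_hit) measurable
  ultimately have "(\<lambda>x. G (hit e (\<lambda>n. f x n - f x e > m)) x) \<in> measurable N (count_space UNIV)"
    by (rule measurable_compose_countable') auto
  then show ?thesis by (simp add: eq)
qed

lemma meas_chain:
  assumes [measurable]: "\<And>k. (\<lambda>x. f x k) \<in> borel_measurable N"
  shows "(\<lambda>x. chain (f x) L m d i) \<in> measurable N (count_space UNIV)"
proof (induction i)
  case 0 then show ?case by simp
next
  case (Suc i)
  have "(\<lambda>x. (\<lambda>opt x. Option.bind opt (step (f x) L m)) (chain (f x) L m d i) x) \<in> measurable N (count_space UNIV)"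
  proof (rule measurable_compose_countable'[OF _ Suc.IH])
    fix opt :: "nat option"
    show "(\<lambda>x. Option.bind opt (step (f x) L m)) \<in> measurable N (count_space UNIV)"
      using meas_step[OF assms] by (cases opt) auto
  qed auto
  then show ?case by simp
qed


lemma (in prob_space) indep_sets_shift:
  fixes I J :: "nat set"
  assumes "indep_sets F I" "\<And>i. i \<in> J \<Longrightarrow> e + i \<in> I"
  shows "indep_sets (\<lambda>i. F (e + i)) J"
  unfolding indep_sets_def
proof (intro conjI ballI allI impI)
  fix i assume "i \<in> J"
  then show "F (e + i) \<subseteq> events" using assms unfolding indep_sets_def by auto
next
  fix K A assume K: "K \<subseteq> J" "K \<noteq> {}" "finite K" and A: "A \<in> Pi K (\<lambda>i. F (e + i))"
  define K' where "K' = (\<lambda>i. e + i) ` K"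
  define A' where "A' j = A (j - e)" for j
  have inj: "inj_on (\<lambda>i. e + i) K" by (auto simp: inj_on_def)
  have "K' \<subseteq> I" "K' \<noteq> {}" "finite K'" using K assms(2) by (auto simp: K'_def)
  moreover have "A' \<in> Pi K' F" using A by (auto simp: K'_def A'_def)
  ultimately have "prob (\<Inter>j\<in>K'. A' j) = (\<Prod>j\<in>K'. prob (A' j))"
    using assms(1) unfolding indep_sets_def by blast
  moreover have "(\<Inter>j\<in>K'. A' j) = (\<Inter>i\<in>K. A i)" by (auto simp: K'_def A'_def)
  moreover have "(\<Prod>j\<in>K'. prob (A' j)) = (\<Prod>i\<in>K. prob (A i))"
    unfolding K'_def by (subst prod.reindex[OF inj]) (simp add: A'_def)
  ultimately show "prob (\<Inter>j\<in>K. A j) = (\<Prod>j\<in>K. prob (A j))" by simp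
qed

locale rw = prob_space +
  fixes X :: "nat \<Rightarrow> 'a \<Rightarrow> real" and \<mu> :: real
  assumes ind: "indep_vars (\<lambda>_. borel) X {1..}"
    and idd: "\<And>k. k \<ge> 1 \<Longrightarrow> distr M borel (X k) = distr M borel (X 1)"
    and mu_pos: "\<mu> > 0"
begin

lemma rvX: "k \<ge> 1 \<Longrightarrow> X k \<in> borel_measurable M"
  using ind unfolding indep_vars_def by auto

lemma rvX'[measurable]: "X (Suc k) \<in> borel_measurable M"
  using rvX by simp

lemma meas_Sdrift[measurable]: "(\<lambda>\<omega>. Sdrift X \<mu> n \<omega>) \<in> borel_measurable M"
  unfolding Sdrift_def by (intro borel_measurable_diff borel_measurable_sum rvX borel_measurable_const) auto

lemma Sdrift_0[simp]: "Sdrift X \<mu> 0 \<omega> = 0"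
  by (simp add: Sdrift_def)

lemma Sdrift_shift: "Sdrift X \<mu> (e + k) \<omega> - Sdrift X \<mu> e \<omega> = (\<Sum>i\<in>{1..k}. X (e + i) \<omega>) - real k * \<mu>"
proof (induction k)
  case 0 then show ?case by simp
next
  case (Suc k)
  have "Sdrift X \<mu> (e + Suc k) \<omega> = Sdrift X \<mu> (e + k) \<omega> + X (e + Suc k) \<omega> - \<mu>"
    by (simp add: Sdrift_def algebra_simps)
  moreover have "(\<Sum>i\<in>{1..Suc k}. X (e + i) \<omega>) = (\<Sum>i\<in>{1..k}. X (e + i) \<omega>) + X (e + Suc k) \<omega>"
    by simp
  ultimately show ?case using Suc.IH by (simp add: algebra_simps)
qed

lemma indep_shift: "indep_vars (\<lambda>_. borel) (\<lambda>i. X (e + i)) {1..H}"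
proof -
  have "indep_sets (\<lambda>i. {X i -` A \<inter> space M |A. A \<in> sets borel}) {1..}"
    using ind unfolding indep_vars_def2 by auto
  then have "indep_sets (\<lambda>i. {X (e + i) -` A \<inter> space M |A. A \<in> sets borel}) {1..H}"
    by (rule indep_sets_shift[where F="\<lambda>i. {X i -` A \<inter> space M |A. A \<in> sets borel}"]) auto
  moreover have "\<forall>i\<in>{1..H}. random_variable borel (X (e + i))" using rvX by auto
  ultimately show ?thesis unfolding indep_vars_def2 by auto
qed

definition Yv :: "nat \<Rightarrow> 'a \<Rightarrow> nat \<Rightarrow> real" where
  "Yv e \<omega> = (\<lambda>i\<in>{1..e}. X i \<omega>)"

definition Zv :: "nat \<Rightarrow> nat \<Rightarrow> 'a \<Rightarrow> nat \<Rightarrow> real" where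
  "Zv e H \<omega> = (\<lambda>i\<in>{1..H}. X (e + i) \<omega>)"

lemma meas_Yv[measurable]: "Yv e \<in> measurable M (PiM {1..e} (\<lambda>_. borel))"
  unfolding Yv_def by (rule measurable_restrict) (use rvX in auto)

lemma meas_Zv[measurable]: "Zv e H \<in> measurable M (PiM {1..H} (\<lambda>_. borel))"
  unfolding Zv_def by (rule measurable_restrict) (use rvX in auto)

lemma distr_Zv: assumes "H \<ge> 1" shows "distr M (PiM {1..H} (\<lambda>_. borel)) (Zv e H) = PiM {1..H} (\<lambda>_. distr M borel (X 1))"
proof -
  define X' where "X' i = (if i \<in> {1..H} then X (e + i) else (\<lambda>_. 0))" for i
  have rv: "random_variable borel (X' i)" for i using rvX by (auto simp: X'_def)
  have "indep_vars (\<lambda>_. borel) X' {1..H}"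
    using indep_vars_cong[of "{1..H}" "{1..H}" "\<lambda>i. X (e + i)" X' "\<lambda>_. borel" "\<lambda>_. borel"] indep_shift[of e H]
    by (simp add: X'_def)
  moreover have ne: "{1..H} \<noteq> {}" using assms by simp
  ultimately have "distr M (PiM {1..H} (\<lambda>_. borel)) (\<lambda>x. \<lambda>i\<in>{1..H}. X' i x) = (\<Pi>\<^sub>M i\<in>{1..H}. distr M borel (X' i))"
    using indep_vars_iff_distr_eq_PiM[where I="{1..H}" and M'="\<lambda>_. borel" and X=X', OF ne rv] by blast
  moreover have "(\<lambda>x. \<lambda>i\<in>{1..H}. X' i x) = Zv e H" unfolding Zv_def X'_def by (intro ext) (simp add: restrict_def)
  moreover have "(\<Pi>\<^sub>M i\<in>{1..H}. distr M borel (X' i)) = PiM {1..H} (\<lambda>_. distr M borel (X 1))"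
  proof (rule PiM_cong)
    fix i assume "i \<in> {1..H}"
    then have "X' i = X (e + i)" "e + i \<ge> 1" by (auto simp: X'_def)
    then show "distr M borel (X' i) = distr M borel (X 1)" using idd[of "e + i"] by simp
  qed simp
  ultimately show ?thesis by simp
qed

lemma prob_Zv: assumes "H \<ge> 1" "B \<in> sets (PiM {1..H} (\<lambda>_. borel))"
  shows "prob (Zv e H -` B \<inter> space M) = prob (Zv 0 H -` B \<inter> space M)"
proof -
  have "prob (Zv e H -` B \<inter> space M) = measure (distr M (PiM {1..H} (\<lambda>_. borel)) (Zv e H)) B"
    by (rule measure_distr[OF meas_Zv assms(2), symmetric])
  also have "\<dots> = measure (distr M (PiM {1..H} (\<lambda>_. borel)) (Zv 0 H)) B"
    unfolding distr_Zv[OF assms(1)] ..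
  also have "\<dots> = prob (Zv 0 H -` B \<inter> space M)"
    by (rule measure_distr[OF meas_Zv assms(2)])
  finally show ?thesis .
qed

lemma indep_block: "indep_var (PiM {1..e} (\<lambda>_. borel)) (Yv e) (PiM {1..H} (\<lambda>_. borel)) (Zv e H)"
proof -
  have "indep_var (PiM {1..e} (\<lambda>_. borel)) (\<lambda>\<omega>. restrict (\<lambda>i. X i \<omega>) {1..e})
     (PiM {e+1..e+H} (\<lambda>_. borel)) (\<lambda>\<omega>. restrict (\<lambda>i. X i \<omega>) {e+1..e+H})"
    by (rule indep_var_restrict[OF ind]) auto
  moreover have "(\<lambda>x. x) \<in> measurable (PiM {1..e} (\<lambda>_. borel)) (PiM {1..e} (\<lambda>_. borel))" by simp
  moreover have "(\<lambda>z. \<lambda>i\<in>{1..H}. z (e + i)) \<in> measurable (PiM {e+1..e+H} (\<lambda>_. borel)) (PiM {1..H} (\<lambda>_. borel))"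
    by (rule measurable_restrict) (rule measurable_component_singleton, auto)
  ultimately have "indep_var (PiM {1..e} (\<lambda>_. borel)) ((\<lambda>x. x) \<circ> (\<lambda>\<omega>. restrict (\<lambda>i. X i \<omega>) {1..e}))
     (PiM {1..H} (\<lambda>_. borel)) ((\<lambda>z. \<lambda>i\<in>{1..H}. z (e + i)) \<circ> (\<lambda>\<omega>. restrict (\<lambda>i. X i \<omega>) {e+1..e+H}))"
    by (rule indep_var_compose)
  moreover have "(\<lambda>x. x) \<circ> (\<lambda>\<omega>. restrict (\<lambda>i. X i \<omega>) {1..e}) = Yv e" by (auto simp: Yv_def)
  moreover have "(\<lambda>z. \<lambda>i\<in>{1..H}. z (e + i)) \<circ> (\<lambda>\<omega>. restrict (\<lambda>i. X i \<omega>) {e+1..e+H}) = Zv e H"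
    by (auto simp: Zv_def fun_eq_iff)
  ultimately show ?thesis by simp
qed

lemma key_fin:
  assumes "H \<ge> 1" "A \<in> sets (PiM {1..e} (\<lambda>_. borel))" "B \<in> sets (PiM {1..H} (\<lambda>_. borel))"
  shows "prob ((Yv e -` A \<inter> space M) \<inter> (Zv e H -` B \<inter> space M)) = prob (Yv e -` A \<inter> space M) * prob (Zv 0 H -` B \<inter> space M)"
proof -
  have "prob ((\<lambda>x. (Yv e x, Zv e H x)) -` (A \<times> B) \<inter> space M) = prob (Yv e -` A \<inter> space M) * prob (Zv e H -` B \<inter> space M)"
    by (rule indep_varD[OF indep_block assms(2,3)])
  moreover have "(\<lambda>x. (Yv e x, Zv e H x)) -` (A \<times> B) \<inter> space M = (Yv e -` A \<inter> space M) \<inter> (Zv e H -` B \<inter> space M)" by auto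
  ultimately show ?thesis using prob_Zv[OF assms(1,3)] by simp
qed

definition Rev :: "nat \<Rightarrow> real \<Rightarrow> 'a set" where
  "Rev e t = {\<omega>\<in>space M. \<exists>k. Sdrift X \<mu> (e + k) \<omega> - Sdrift X \<mu> e \<omega> > t}"

definition RevH :: "nat \<Rightarrow> real \<Rightarrow> nat \<Rightarrow> 'a set" where
  "RevH e t H = {\<omega>\<in>space M. \<exists>k\<in>{1..H}. Sdrift X \<mu> (e + k) \<omega> - Sdrift X \<mu> e \<omega> > t}"

lemma Rev_sets[measurable]: "Rev e t \<in> sets M"
  unfolding Rev_def by measurable

lemma RevH_sets[measurable]: "RevH e t H \<in> sets M"
  unfolding RevH_def by measurable

definition BH :: "real \<Rightarrow> nat \<Rightarrow> (nat \<Rightarrow> real) set" where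
  "BH t H = {z\<in>space (PiM {1..H} (\<lambda>_. borel)). \<exists>k\<in>{1..H}. (\<Sum>i\<in>{1..k}. z i) - real k * \<mu> > t}"

lemma BH_sets: "BH t H \<in> sets (PiM {1..H} (\<lambda>_. borel))"
proof -
  have "(\<lambda>z. (\<Sum>i\<in>{1..k}. z i) - real k * \<mu>) \<in> borel_measurable (PiM {1..H} (\<lambda>_. borel))" if "k \<in> {1..H}" for k
    using that by (intro borel_measurable_diff borel_measurable_sum borel_measurable_const)
       (rule measurable_component_singleton, auto)
  then show ?thesis unfolding BH_def by measurable
qed

lemma RevH_eq: "RevH e t H = Zv e H -` BH t H \<inter> space M"
proof -
  have S: "(\<Sum>i\<in>{1..k}. Zv e H \<omega> i) = (\<Sum>i\<in>{1..k}. X (e + i) \<omega>)" if "k \<in> {1..H}" for k \<omega>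
    using that by (intro sum.cong) (auto simp: Zv_def)
  have Sp: "\<omega> \<in> space M \<Longrightarrow> Zv e H \<omega> \<in> space (PiM {1..H} (\<lambda>_. borel))" for \<omega>
    using measurable_space[OF meas_Zv] by blast
  show ?thesis
  proof (intro set_eqI iffI)
    fix \<omega> assume "\<omega> \<in> RevH e t H"
    then obtain k where k: "\<omega> \<in> space M" "k \<in> {1..H}" "Sdrift X \<mu> (e + k) \<omega> - Sdrift X \<mu> e \<omega> > t"
      unfolding RevH_def by blast
    then have "(\<Sum>i\<in>{1..k}. Zv e H \<omega> i) - real k * \<mu> > t" using S[OF k(2)] Sdrift_shift by simp
    then show "\<omega> \<in> Zv e H -` BH t H \<inter> space M" using k Sp unfolding BH_def by blast
  next
    fix \<omega> assume "\<omega> \<in> Zv e H -` BH t H \<inter> space M"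
    then obtain k where k: "\<omega> \<in> space M" "k \<in> {1..H}" "(\<Sum>i\<in>{1..k}. Zv e H \<omega> i) - real k * \<mu> > t"
      unfolding BH_def by blast
    then have "Sdrift X \<mu> (e + k) \<omega> - Sdrift X \<mu> e \<omega> > t" using S[OF k(2)] Sdrift_shift by simp
    then show "\<omega> \<in> RevH e t H" using k unfolding RevH_def by blast
  qed
qed

lemma Rev_UN: assumes "t \<ge> 0" shows "Rev e t = (\<Union>H. RevH e t (Suc H))"
proof (intro equalityI subsetI)
  fix \<omega> assume "\<omega> \<in> Rev e t"
  then obtain k where k: "\<omega> \<in> space M" "Sdrift X \<mu> (e + k) \<omega> - Sdrift X \<mu> e \<omega> > t"
    unfolding Rev_def by blast
  have "k \<noteq> 0" using k(2) assms by (cases k) auto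
  then have "k \<in> {1..Suc (k - 1)}" by auto
  then have "\<omega> \<in> RevH e t (Suc (k - 1))" unfolding RevH_def using k by blast
  then show "\<omega> \<in> (\<Union>H. RevH e t (Suc H))" by blast
next
  fix \<omega> assume "\<omega> \<in> (\<Union>H. RevH e t (Suc H))"
  then show "\<omega> \<in> Rev e t" unfolding Rev_def RevH_def by blast
qed

end

context rw
begin

lemma RevH_mono: "H \<le> H' \<Longrightarrow> RevH e t H \<subseteq> RevH e t H'"
  unfolding RevH_def by force

lemma key:
  assumes A: "A \<in> sets (PiM {1..e} (\<lambda>_. borel))" and t: "t \<ge> 0"
  shows "prob ((Yv e -` A \<inter> space M) \<inter> Rev e t) = prob (Yv e -` A \<inter> space M) * prob (Rev 0 t)"
proof -
  define C where "C = Yv e -` A \<inter> space M"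
  have C: "C \<in> sets M" unfolding C_def using A by (rule measurable_sets[OF meas_Yv])
  have fin: "prob (C \<inter> RevH e t (Suc H)) = prob C * prob (RevH 0 t (Suc H))" for H
    unfolding C_def RevH_eq by (rule key_fin[OF _ A BH_sets]) simp
  have L1: "(\<lambda>H. prob (C \<inter> RevH e t (Suc H))) \<longlonglongrightarrow> prob (\<Union>H. C \<inter> RevH e t (Suc H))"
  proof (rule finite_Lim_measure_incseq)
    show "range (\<lambda>H. C \<inter> RevH e t (Suc H)) \<subseteq> sets M" using C by auto
    show "incseq (\<lambda>H. C \<inter> RevH e t (Suc H))"
      unfolding incseq_def using RevH_mono by (metis Int_mono Suc_le_mono order_refl)
  qed
  have L2: "(\<lambda>H. prob (RevH 0 t (Suc H))) \<longlonglongrightarrow> prob (\<Union>H. RevH 0 t (Suc H))"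
  proof (rule finite_Lim_measure_incseq)
    show "range (\<lambda>H. RevH 0 t (Suc H)) \<subseteq> sets M" by auto
    show "incseq (\<lambda>H. RevH 0 t (Suc H))"
      unfolding incseq_def using RevH_mono by (metis Suc_le_mono)
  qed
  have e1: "(\<Union>H. C \<inter> RevH e t (Suc H)) = C \<inter> Rev e t" using Rev_UN[OF t] by auto
  have e2: "(\<Union>H. RevH 0 t (Suc H)) = Rev 0 t" using Rev_UN[OF t] by auto
  have "(\<lambda>H. prob C * prob (RevH 0 t (Suc H))) \<longlonglongrightarrow> prob C * prob (Rev 0 t)"
    using L2 unfolding e2 by (rule tendsto_mult_left)
  moreover have "(\<lambda>H. prob C * prob (RevH 0 t (Suc H))) \<longlonglongrightarrow> prob (C \<inter> Rev e t)"
    using L1 unfolding e1 fin .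
  ultimately show ?thesis unfolding C_def[symmetric] using LIMSEQ_unique by blast
qed

lemma key_compl:
  assumes A: "A \<in> sets (PiM {1..e} (\<lambda>_. borel))" and t: "t \<ge> 0"
  shows "prob ((Yv e -` A \<inter> space M) \<inter> (space M - Rev e t)) = prob (Yv e -` A \<inter> space M) * prob (space M - Rev 0 t)"
proof -
  define C where "C = Yv e -` A \<inter> space M"
  have C: "C \<in> sets M" unfolding C_def using A by (rule measurable_sets[OF meas_Yv])
  have "C \<inter> (space M - Rev e t) = C - Rev e t" using sets.sets_into_space[OF C] by auto
  then have "prob (C \<inter> (space M - Rev e t)) = prob C - prob (C \<inter> Rev e t)"
    using finite_measure_Diff'[OF C Rev_sets] by simp
  also have "\<dots> = prob C - prob C * prob (Rev 0 t)" using key[OF A t] unfolding C_def by simp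
  also have "\<dots> = prob C * prob (space M - Rev 0 t)"
  proof -
    have "prob (space M - Rev 0 t) = 1 - prob (Rev 0 t)" by (rule prob_compl[OF Rev_sets])
    then show ?thesis by (simp add: right_diff_distrib)
  qed
  finally show ?thesis unfolding C_def .
qed

definition path :: "'a \<Rightarrow> nat \<Rightarrow> real" where
  "path \<omega> = (\<lambda>k. Sdrift X \<mu> k \<omega>)"

definition pv :: "nat \<Rightarrow> (nat \<Rightarrow> real) \<Rightarrow> nat \<Rightarrow> real" where
  "pv e y k = (\<Sum>i\<in>{1..min k e}. y i) - real (min k e) * \<mu>"

definition Ach :: "real \<Rightarrow> real \<Rightarrow> nat \<Rightarrow> nat \<Rightarrow> nat \<Rightarrow> (nat \<Rightarrow> real) set" where
  "Ach L m d K e = {y\<in>space (PiM {1..e} (\<lambda>_. borel)). chain (pv e y) L m d K = Some e}"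

lemma Ach_sets: "Ach L m d K e \<in> sets (PiM {1..e} (\<lambda>_. borel))"
proof -
  have "(\<lambda>y. pv e y k) \<in> borel_measurable (PiM {1..e} (\<lambda>_. borel))" for k
    unfolding pv_def
    by (intro borel_measurable_diff borel_measurable_sum borel_measurable_const)
       (rule measurable_component_singleton, auto)
  then have g: "(\<lambda>y. chain (pv e y) L m d K) \<in> measurable (PiM {1..e} (\<lambda>_. borel)) (count_space UNIV)"
    by (rule meas_chain)
  have "Ach L m d K e = (\<lambda>y. chain (pv e y) L m d K) -` {Some e} \<inter> space (PiM {1..e} (\<lambda>_. borel))"
    unfolding Ach_def by auto
  also have "\<dots> \<in> sets (PiM {1..e} (\<lambda>_. borel))"
    by (rule measurable_sets[OF g]) simp
  finally show ?thesis .
qed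

lemma pv_Yv: "\<omega> \<in> space M \<Longrightarrow> pv e (Yv e \<omega>) k = Sdrift X \<mu> (min k e) \<omega>"
  unfolding pv_def Sdrift_def Yv_def by (intro arg_cong2[where f="(-)"] sum.cong) auto

lemma chain_event: "{\<omega>\<in>space M. chain (path \<omega>) L m d K = Some e} = Yv e -` Ach L m d K e \<inter> space M"
proof (intro set_eqI iffI)
  fix \<omega> assume "\<omega> \<in> {\<omega>\<in>space M. chain (path \<omega>) L m d K = Some e}"
  then have \<omega>: "\<omega> \<in> space M" "chain (path \<omega>) L m d K = Some e" by auto
  have "chain (pv e (Yv e \<omega>)) L m d K = Some e"
    by (rule chain_local[OF \<omega>(2)]) (simp add: pv_Yv[OF \<omega>(1)] path_def min_def)
  moreover have "Yv e \<omega> \<in> space (PiM {1..e} (\<lambda>_. borel))" using measurable_space[OF meas_Yv \<omega>(1)] .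
  ultimately show "\<omega> \<in> Yv e -` Ach L m d K e \<inter> space M" using \<omega> by (simp add: Ach_def)
next
  fix \<omega> assume "\<omega> \<in> Yv e -` Ach L m d K e \<inter> space M"
  then have \<omega>: "\<omega> \<in> space M" "chain (pv e (Yv e \<omega>)) L m d K = Some e" by (auto simp: Ach_def)
  have "chain (path \<omega>) L m d K = Some e"
    by (rule chain_local[OF \<omega>(2)]) (simp add: pv_Yv[OF \<omega>(1)] path_def min_def)
  then show "\<omega> \<in> {\<omega>\<in>space M. chain (path \<omega>) L m d K = Some e}" using \<omega> by simp
qed

lemma chain_sets[measurable]: "{\<omega>\<in>space M. chain (path \<omega>) L m d K = Some e} \<in> sets M"
  unfolding chain_event by (rule measurable_sets[OF meas_Yv Ach_sets])

lemma meas_chain_M: "(\<lambda>\<omega>. chain (path \<omega>) L m d K) \<in> measurable M (count_space UNIV)"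
  unfolding path_def by (rule meas_chain) simp

lemma chain_notNone_sets: "{\<omega>\<in>space M. chain (path \<omega>) L m d K \<noteq> None} \<in> sets M"
proof -
  have "{\<omega>\<in>space M. chain (path \<omega>) L m d K \<noteq> None} = (\<lambda>\<omega>. chain (path \<omega>) L m d K) -` (UNIV - {None}) \<inter> space M"
    by auto
  also have "\<dots> \<in> sets M" by (rule measurable_sets[OF meas_chain_M]) simp
  finally show ?thesis .
qed

lemma chain_step_prob:
  assumes m: "m > 0"
  shows "prob {\<omega>\<in>space M. chain (path \<omega>) L m d (Suc K) \<noteq> None}
    \<le> prob (Rev 0 m) * prob {\<omega>\<in>space M. chain (path \<omega>) L m d K \<noteq> None}"
proof -
  define F where "F e = {\<omega>\<in>space M. chain (path \<omega>) L m d K = Some e}" for e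
  define E where "E e = F e \<inter> Rev e m" for e
  have F: "F e \<in> sets M" for e unfolding F_def by simp
  have E: "E e \<in> sets M" for e unfolding E_def using F by simp
  have dF: "disjoint_family F" unfolding disjoint_family_on_def F_def by auto
  have dE: "disjoint_family E" using dF unfolding disjoint_family_on_def E_def by auto
  have sub: "{\<omega>\<in>space M. chain (path \<omega>) L m d (Suc K) \<noteq> None} \<subseteq> (\<Union>e. E e)"
  proof
    fix \<omega> assume "\<omega> \<in> {\<omega>\<in>space M. chain (path \<omega>) L m d (Suc K) \<noteq> None}"
    then obtain e e' where \<omega>: "\<omega> \<in> space M" "chain (path \<omega>) L m d K = Some e" "step (path \<omega>) L m e = Some e'"
      by (auto split: Option.bind_splits)
    obtain u where u: "hit e (\<lambda>n. path \<omega> n - path \<omega> e > m) = enat u"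
      using \<omega>(3) by (rule step_SomeD)
    have "e \<le> u" "path \<omega> u - path \<omega> e > m" using hit_enatD[OF u] by auto
    then have "Sdrift X \<mu> (e + (u - e)) \<omega> - Sdrift X \<mu> e \<omega> > m" by (simp add: path_def)
    then have "\<omega> \<in> Rev e m" unfolding Rev_def using \<omega>(1) by blast
    then show "\<omega> \<in> (\<Union>e. E e)" using \<omega> unfolding E_def F_def by blast
  qed
  have sE: "(\<lambda>e. prob (E e)) sums prob (\<Union>e. E e)"
    by (rule finite_measure_UNION) (use E dE in auto)
  have sF: "(\<lambda>e. prob (F e)) sums prob (\<Union>e. F e)"
    by (rule finite_measure_UNION) (use F dF in auto)
  have PE: "prob (E e) = prob (F e) * prob (Rev 0 m)" for e
    unfolding E_def F_def chain_event using key[OF Ach_sets, of m] m by simp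
  have UF: "(\<Union>e. F e) = {\<omega>\<in>space M. chain (path \<omega>) L m d K \<noteq> None}" unfolding F_def by auto
  have "(\<lambda>e. prob (F e) * prob (Rev 0 m)) sums (prob (\<Union>e. F e) * prob (Rev 0 m))"
    by (rule sums_mult2[OF sF])
  then have "prob (\<Union>e. E e) = prob (\<Union>e. F e) * prob (Rev 0 m)"
    using sE unfolding PE by (rule sums_unique2[symmetric])
  moreover have "prob {\<omega>\<in>space M. chain (path \<omega>) L m d (Suc K) \<noteq> None} \<le> prob (\<Union>e. E e)"
    by (rule finite_measure_mono[OF sub]) (use E in auto)
  ultimately show ?thesis unfolding UF by (simp add: mult.commute)
qed

lemma chain_prob_pow:
  assumes m: "m > 0"
  shows "prob {\<omega>\<in>space M. chain (path \<omega>) L m d K \<noteq> None} \<le> prob (Rev 0 m) ^ K"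
proof (induction K)
  case 0 then show ?case by simp
next
  case (Suc K)
  have "prob {\<omega>\<in>space M. chain (path \<omega>) L m d (Suc K) \<noteq> None}
    \<le> prob (Rev 0 m) * prob {\<omega>\<in>space M. chain (path \<omega>) L m d K \<noteq> None}"
    by (rule chain_step_prob[OF m])
  also have "\<dots> \<le> prob (Rev 0 m) * prob (Rev 0 m) ^ K"
    by (rule mult_left_mono[OF Suc.IH]) simp
  finally show ?case by simp
qed

lemma chain_null:
  assumes m: "m > 0" and q: "prob (Rev 0 m) < 1"
  shows "{\<omega>\<in>space M. \<forall>K. chain (path \<omega>) L m d K \<noteq> None} \<in> null_sets M"
proof -
  define N where "N = {\<omega>\<in>space M. \<forall>K. chain (path \<omega>) L m d K \<noteq> None}"
  have N_eq: "N = (\<Inter>K. {\<omega>\<in>space M. chain (path \<omega>) L m d K \<noteq> None})" unfolding N_def by auto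
  have N: "N \<in> sets M" unfolding N_eq using chain_notNone_sets by auto
  have le: "prob N \<le> prob (Rev 0 m) ^ K" for K
  proof -
    have "prob N \<le> prob {\<omega>\<in>space M. chain (path \<omega>) L m d K \<noteq> None}"
      by (rule finite_measure_mono) (auto simp: N_def chain_notNone_sets)
    also have "\<dots> \<le> prob (Rev 0 m) ^ K" by (rule chain_prob_pow[OF m])
    finally show ?thesis .
  qed
  have "(\<lambda>K. prob (Rev 0 m) ^ K) \<longlonglongrightarrow> 0" by (rule LIMSEQ_power_zero) (use q in simp)
  then have "prob N \<le> 0" using le by (intro LIMSEQ_le_const) auto
  then have "prob N = 0" using measure_nonneg[of M N] by linarith
  then show ?thesis unfolding N_def[symmetric] using N by (simp add: emeasure_eq_measure null_setsI)
qed

lemma partC: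
  assumes m: "m > 0" and q: "prob (Rev 0 m) < 1"
  shows "AE \<omega> in M. \<exists>\<^sub>\<infinity>n. Utime (\<lambda>k. Sdrift X \<mu> k \<omega>) L m n = \<infinity>"
proof (rule AE_I')
  show "(\<Union>d. {\<omega>\<in>space M. \<forall>K. chain (path \<omega>) L m d K \<noteq> None}) \<in> null_sets M"
    using chain_null[OF m q] by blast
  show "{\<omega>\<in>space M. \<not> (\<exists>\<^sub>\<infinity>n. Utime (\<lambda>k. Sdrift X \<mu> k \<omega>) L m n = \<infinity>)}
     \<subseteq> (\<Union>d. {\<omega>\<in>space M. \<forall>K. chain (path \<omega>) L m d K \<noteq> None})"
  proof
    fix \<omega> assume "\<omega> \<in> {\<omega>\<in>space M. \<not> (\<exists>\<^sub>\<infinity>n. Utime (\<lambda>k. Sdrift X \<mu> k \<omega>) L m n = \<infinity>)}"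
    then have \<omega>: "\<omega> \<in> space M" and "\<forall>\<^sub>\<infinity>n. Utime (path \<omega>) L m n \<noteq> \<infinity>"
      by (auto simp: path_def[abs_def])
    then obtain J0 where J0: "\<forall>n>J0. Utime (path \<omega>) L m n \<noteq> \<infinity>" unfolding MOST_nat by blast
    have U: "\<forall>j\<ge>Suc J0. Utime (path \<omega>) L m j \<noteq> \<infinity>" using J0 by auto
    then obtain d where d: "Dtime (path \<omega>) L m (Suc J0) = enat d"
      using U_fin_D_fin[of "Suc J0"] by blast
    have "\<forall>K. chain (path \<omega>) L m d K \<noteq> None"
      using chain_DU[OF _ d U] by fastforce
    then show "\<omega> \<in> (\<Union>d. {\<omega>\<in>space M. \<forall>K. chain (path \<omega>) L m d K \<noteq> None})" using \<omega> by blast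
  qed
qed

end

context rw
begin

lemma Sdrift_1: "Sdrift X \<mu> 1 \<omega> = X 1 \<omega> - \<mu>"
  by (simp add: Sdrift_def)

lemma Sdrift_Suc0: "Sdrift X \<mu> (Suc 0) \<omega> = X (Suc 0) \<omega> - \<mu>"
  by (simp add: Sdrift_def)

lemma Rev0_compl: "space M - Rev 0 t = {\<omega>\<in>space M. \<forall>k. Sdrift X \<mu> k \<omega> \<le> t}"
  unfolding Rev_def by (auto simp: not_less) (meson not_le)

lemma p_mono: assumes "t1 \<le> t2" shows "prob (space M - Rev 0 t1) \<le> prob (space M - Rev 0 t2)"
proof (rule finite_measure_mono)
  show "space M - Rev 0 t1 \<subseteq> space M - Rev 0 t2"
  proof
    fix \<omega> assume "\<omega> \<in> space M - Rev 0 t1"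
    then have "\<omega> \<in> space M" "\<And>k. Sdrift X \<mu> k \<omega> \<le> t1" unfolding Rev0_compl by auto
    moreover have "Sdrift X \<mu> k \<omega> \<le> t2" for k using \<open>\<And>k. Sdrift X \<mu> k \<omega> \<le> t1\<close>[of k] assms by linarith
    ultimately show "\<omega> \<in> space M - Rev 0 t2" unfolding Rev0_compl by simp
  qed
qed simp

lemma p_step:
  assumes t: "t \<ge> 0"
  shows "prob {\<omega>\<in>space M. X 1 \<omega> \<le> 0} * prob (space M - Rev 0 (t + \<mu>)) \<le> prob (space M - Rev 0 t)"
proof -
  define A1 where "A1 = {y\<in>space (PiM {1..1::nat} (\<lambda>_. borel)). y 1 \<le> (0::real)}"
  have A1: "A1 \<in> sets (PiM {1..1} (\<lambda>_. borel))"
  proof -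
    have "(\<lambda>y. y 1) \<in> borel_measurable (PiM {1..1::nat} (\<lambda>_. borel))"
      by (rule measurable_component_singleton) simp
    then show ?thesis unfolding A1_def by measurable
  qed
  have CA: "Yv 1 -` A1 \<inter> space M = {\<omega>\<in>space M. X 1 \<omega> \<le> 0}"
    using measurable_space[OF meas_Yv[of 1]] by (auto simp: A1_def Yv_def)
  have tmu: "t + \<mu> \<ge> 0" using t mu_pos by simp
  have "prob {\<omega>\<in>space M. X 1 \<omega> \<le> 0} * prob (space M - Rev 0 (t + \<mu>))
      = prob ({\<omega>\<in>space M. X 1 \<omega> \<le> 0} \<inter> (space M - Rev 1 (t + \<mu>)))"
    using key_compl[OF A1 tmu] unfolding CA by simp
  also have "\<dots> \<le> prob (space M - Rev 0 t)"
  proof (rule finite_measure_mono)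
    show "space M - Rev 0 t \<in> sets M" by simp
    show "{\<omega>\<in>space M. X 1 \<omega> \<le> 0} \<inter> (space M - Rev 1 (t + \<mu>)) \<subseteq> space M - Rev 0 t"
    proof
      fix \<omega> assume "\<omega> \<in> {\<omega>\<in>space M. X 1 \<omega> \<le> 0} \<inter> (space M - Rev 1 (t + \<mu>))"
      then have \<omega>: "\<omega> \<in> space M" "X 1 \<omega> \<le> 0" "\<And>k. Sdrift X \<mu> (1 + k) \<omega> - Sdrift X \<mu> 1 \<omega> \<le> t + \<mu>"
        unfolding Rev_def by (auto simp: not_less)
      have "Sdrift X \<mu> k \<omega> \<le> t" for k
      proof (cases k)
        case 0 then show ?thesis using t by simp
      next
        case (Suc k')
        have "Sdrift X \<mu> (1 + k') \<omega> - Sdrift X \<mu> 1 \<omega> \<le> t + \<mu>" by (rule \<omega>(3))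
        then show ?thesis using \<omega>(2) Suc by (simp add: Sdrift_Suc0)
      qed
      then show "\<omega> \<in> space M - Rev 0 t" using \<omega>(1) unfolding Rev0_compl by simp
    qed
  qed
  finally show ?thesis .
qed

lemma p_pow:
  assumes t: "t \<ge> 0"
  shows "prob {\<omega>\<in>space M. X 1 \<omega> \<le> 0} ^ n * prob (space M - Rev 0 (t + real n * \<mu>)) \<le> prob (space M - Rev 0 t)"
proof (induction n)
  case 0 then show ?case by simp
next
  case (Suc n)
  define r where "r = prob {\<omega>\<in>space M. X 1 \<omega> \<le> 0}"
  have "t + real n * \<mu> \<ge> 0" using t mu_pos by simp
  then have "r * prob (space M - Rev 0 (t + real n * \<mu> + \<mu>)) \<le> prob (space M - Rev 0 (t + real n * \<mu>))"
    unfolding r_def by (rule p_step)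
  then have "r ^ n * (r * prob (space M - Rev 0 (t + real n * \<mu> + \<mu>))) \<le> r ^ n * prob (space M - Rev 0 (t + real n * \<mu>))"
    by (rule mult_left_mono) (simp add: r_def)
  also have "\<dots> \<le> prob (space M - Rev 0 t)" using Suc.IH unfolding r_def .
  finally show ?case by (simp add: r_def algebra_simps)
qed

lemma q_lt1:
  assumes bdd: "AE \<omega> in M. \<exists>B. \<forall>k. Sdrift X \<mu> k \<omega> \<le> B"
    and int: "integrable M (X 1)" and mean: "expectation (X 1) = 0" and m: "m > 0"
  shows "prob (Rev 0 m) < 1"
proof -
  define p where "p t = prob (space M - Rev 0 t)" for t
  have "\<exists>K::nat. p (real K) > 0"
  proof (rule ccontr)
    assume nK: "\<not> (\<exists>K::nat. p (real K) > 0)"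
    then have z: "p (real K) = 0" for K
    proof -
      have "0 \<le> p (real K)" "\<not> 0 < p (real K)" using nK unfolding p_def by auto
      then show ?thesis by linarith
    qed
    have N1: "(\<Union>K. space M - Rev 0 (real K)) \<in> null_sets M"
    proof (intro null_sets_UN null_setsI)
      fix K show "space M - Rev 0 (real K) \<in> sets M" by simp
      then show "emeasure M (space M - Rev 0 (real K)) = 0" using z[of K] by (simp add: p_def emeasure_eq_measure)
    qed
    have sub1: "{\<omega>\<in>space M. \<exists>B. \<forall>k. Sdrift X \<mu> k \<omega> \<le> B} \<subseteq> (\<Union>K. space M - Rev 0 (real K))"
    proof (rule subsetI)
      fix \<omega> assume "\<omega> \<in> {\<omega>\<in>space M. \<exists>B. \<forall>k. Sdrift X \<mu> k \<omega> \<le> B}"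
      then obtain B where \<omega>: "\<omega> \<in> space M" and B: "\<And>k. Sdrift X \<mu> k \<omega> \<le> B" by blast
      obtain K :: nat where K: "B < real K" using reals_Archimedean2[of B] by (auto simp del: of_nat_less_iff)
      have "Sdrift X \<mu> k \<omega> \<le> real K" for k using B[of k] K by linarith
      then have "\<omega> \<in> space M - Rev 0 (real K)" using \<omega> unfolding Rev0_compl by simp
      then show "\<omega> \<in> (\<Union>K. space M - Rev 0 (real K))" by (rule UN_I[rotated]) simp
    qed
    obtain N where N: "N \<in> null_sets M" "{\<omega>\<in>space M. \<not> (\<exists>B. \<forall>k. Sdrift X \<mu> k \<omega> \<le> B)} \<subseteq> N"
      using bdd unfolding eventually_ae_filter by blast
    have NN: "(\<Union>K. space M - Rev 0 (real K)) \<union> N \<in> null_sets M" using N1 N(1) by (rule null_sets.Un)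
    have "{\<omega>\<in>space M. \<not> False} \<subseteq> (\<Union>K. space M - Rev 0 (real K)) \<union> N"
    proof
      fix \<omega> assume "\<omega> \<in> {\<omega>\<in>space M. \<not> False}"
      then have "\<omega> \<in> space M" by simp
      then show "\<omega> \<in> (\<Union>K. space M - Rev 0 (real K)) \<union> N"
        using sub1 N(2) by (cases "\<exists>B. \<forall>k. Sdrift X \<mu> k \<omega> \<le> B") blast+
    qed
    then have "AE \<omega> in M. False" by (rule AE_I'[OF NN])
    then show False using AE_False by simp
  qed
  then obtain K :: nat where K: "p (real K) > 0" by blast
  define r where "r = prob {\<omega>\<in>space M. X 1 \<omega> \<le> 0}"
  have r: "r > 0"
  proof (rule ccontr)
    assume "\<not> r > 0"
    moreover have "0 \<le> r" unfolding r_def by simp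
    ultimately have "r = 0" by linarith
    then have "{\<omega>\<in>space M. X 1 \<omega> \<le> 0} \<in> null_sets M"
      unfolding r_def by (intro null_setsI) (simp_all add: emeasure_eq_measure)
    then have pos: "AE \<omega> in M. X 1 \<omega> > 0" by (rule AE_I') (simp add: not_less Collect_mono)
    then have "AE \<omega> in M. 0 \<le> X 1 \<omega>" by eventually_elim simp
    then have "AE \<omega> in M. X 1 \<omega> = 0" using integral_nonneg_eq_0_iff_AE[OF int] mean by simp
    with pos have "AE \<omega> in M. False" by eventually_elim simp
    then show False using AE_False by simp
  qed
  obtain n :: nat where n: "real K / \<mu> < real n" using reals_Archimedean2[of "real K / \<mu>"] by auto
  then have "real K \<le> m + real n * \<mu>" using mu_pos m by (simp add: field_simps)
  then have "p (real K) \<le> p (m + real n * \<mu>)" unfolding p_def by (rule p_mono)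
  then have "r ^ n * p (real K) \<le> r ^ n * p (m + real n * \<mu>)" using r by (intro mult_left_mono) auto
  also have "\<dots> \<le> p m" unfolding p_def r_def using m by (intro p_pow) simp
  moreover have "r ^ n * p (real K) > 0" using r K by simp
  ultimately have "p m > 0" by linarith
  moreover have "p m = 1 - prob (Rev 0 m)" unfolding p_def by (rule prob_compl[OF Rev_sets])
  ultimately show ?thesis by simp
qed

end

context rw
begin

lemma distr_g: assumes "k \<ge> 1" "g \<in> borel_measurable borel"
  shows "distr M borel (\<lambda>\<omega>. g (X k \<omega>)) = distr M borel (\<lambda>\<omega>. g (X 1 \<omega>))"
proof -
  have "distr M borel (\<lambda>\<omega>. g (X k \<omega>)) = distr (distr M borel (X k)) borel g"
    using distr_distr[OF assms(2) rvX[OF assms(1)]] by (simp add: comp_def)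
  also have "\<dots> = distr (distr M borel (X 1)) borel g" using idd[OF assms(1)] by simp
  also have "\<dots> = distr M borel (\<lambda>\<omega>. g (X 1 \<omega>))"
    using distr_distr[OF assms(2) rvX[of 1]] by (simp add: comp_def)
  finally show ?thesis .
qed

lemma exp_iid: fixes h :: "real \<Rightarrow> real" assumes "k \<ge> 1" "h \<in> borel_measurable borel"
  shows "expectation (\<lambda>\<omega>. h (X k \<omega>)) = expectation (\<lambda>\<omega>. h (X 1 \<omega>))"
proof -
  have "expectation (\<lambda>\<omega>. h (X k \<omega>)) = integral\<^sup>L (distr M borel (X k)) h"
    by (rule integral_distr[OF rvX[OF assms(1)] assms(2), symmetric])
  also have "\<dots> = integral\<^sup>L (distr M borel (X 1)) h" using idd[OF assms(1)] by simp
  also have "\<dots> = expectation (\<lambda>\<omega>. h (X 1 \<omega>))"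
    by (rule integral_distr[OF rvX[of 1] assms(2)]) simp
  finally show ?thesis .
qed

lemma prob_iid: assumes "k \<ge> 1" "S \<in> sets borel"
  shows "prob {\<omega>\<in>space M. X k \<omega> \<in> S} = prob {\<omega>\<in>space M. X 1 \<omega> \<in> S}"
proof -
  have "prob {\<omega>\<in>space M. X k \<omega> \<in> S} = measure (distr M borel (X k)) S"
    using measure_distr[OF rvX[OF assms(1)] assms(2)] by (simp add: vimage_def Int_def conj_commute)
  also have "\<dots> = measure (distr M borel (X 1)) S" using idd[OF assms(1)] by simp
  also have "\<dots> = prob {\<omega>\<in>space M. X 1 \<omega> \<in> S}"
    using measure_distr[OF rvX[of 1] assms(2)] by (simp add: vimage_def Int_def conj_commute)
  finally show ?thesis .
qed

lemma indep_g: "finite I \<Longrightarrow> I \<subseteq> {1..} \<Longrightarrow> g \<in> borel_measurable borel \<Longrightarrow> indep_vars (\<lambda>_. borel) (\<lambda>k \<omega>. g (X k \<omega>)) I"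
  using indep_vars_compose2[OF indep_vars_subset[OF ind], of I "\<lambda>_. g" "\<lambda>_. borel"] by auto

end

lemma (in prob_space) var_sum:
  fixes Y :: "nat \<Rightarrow> 'a \<Rightarrow> real"
  assumes I: "finite I" and ind: "indep_vars (\<lambda>_. borel) Y I"
    and bnd: "\<And>i \<omega>. i \<in> I \<Longrightarrow> \<bar>Y i \<omega>\<bar> \<le> T"
  shows "variance (\<lambda>\<omega>. \<Sum>i\<in>I. Y i \<omega>) = (\<Sum>i\<in>I. variance (Y i))"
proof -
  have rv: "i \<in> I \<Longrightarrow> Y i \<in> borel_measurable M" for i using ind unfolding indep_vars_def by auto
  have intY: "i \<in> I \<Longrightarrow> integrable M (Y i)" for i
    by (rule integrable_const_bound[where B=T]) (use bnd rv in \<open>simp_all add: AE_I2\<close>)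
  define c where "c i = expectation (Y i)" for i
  define Yc where "Yc i \<omega> = Y i \<omega> - c i" for i \<omega>
  have rvc: "i \<in> I \<Longrightarrow> Yc i \<in> borel_measurable M" for i unfolding Yc_def using rv by simp
  have bndc: "\<bar>Yc i \<omega>\<bar> \<le> 2 * T" if i: "i \<in> I" for i \<omega>
  proof -
    have le1: "Y i x \<le> T" "- T \<le> Y i x" for x using bnd[OF i, of x] by linarith+
    have "expectation (Y i) \<le> expectation (\<lambda>_. T)"
      by (rule integral_mono[OF intY[OF i] integrable_const]) (rule le1)
    moreover have "expectation (\<lambda>_. - T) \<le> expectation (Y i)"
      by (rule integral_mono[OF integrable_const intY[OF i]]) (rule le1)
    ultimately have "\<bar>c i\<bar> \<le> T" unfolding c_def by (simp add: prob_space)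
    then show ?thesis using bnd[OF i, of \<omega>] unfolding Yc_def by linarith
  qed
  have intYc: "integrable M (\<lambda>\<omega>. Yc i \<omega> * Yc j \<omega>)" if ij: "i \<in> I" "j \<in> I" for i j
  proof (rule integrable_const_bound[where B="2 * T * (2 * T)"])
    have "\<bar>Yc i \<omega>\<bar> * \<bar>Yc j \<omega>\<bar> \<le> 2 * T * (2 * T)" for \<omega>
      using bndc[OF ij(1), of \<omega>] bndc[OF ij(2), of \<omega>] abs_ge_zero[of "Yc i \<omega>"] abs_ge_zero[of "Yc j \<omega>"]
      by (intro mult_mono) linarith+
    then show "AE \<omega> in M. norm (Yc i \<omega> * Yc j \<omega>) \<le> 2 * T * (2 * T)"
      by (intro AE_I2) (simp add: abs_mult)
    show "(\<lambda>\<omega>. Yc i \<omega> * Yc j \<omega>) \<in> borel_measurable M" using rvc[OF ij(1)] rvc[OF ij(2)] by simp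
  qed
  have EYc: "i \<in> I \<Longrightarrow> expectation (Yc i) = 0" for i
    unfolding Yc_def c_def using intY by (simp add: prob_space)
  have indc: "indep_vars (\<lambda>_. borel) Yc I"
    unfolding Yc_def using indep_vars_compose2[OF ind, of "\<lambda>i x. x - c i" "\<lambda>_. borel"] by simp
  have cross: "i \<in> I \<Longrightarrow> j \<in> I \<Longrightarrow> i \<noteq> j \<Longrightarrow> expectation (\<lambda>\<omega>. Yc i \<omega> * Yc j \<omega>) = 0" for i j
  proof -
    assume ij: "i \<in> I" "j \<in> I" "i \<noteq> j"
    have "expectation (\<lambda>\<omega>. \<Prod>k\<in>{i, j}. Yc k \<omega>) = (\<Prod>k\<in>{i, j}. expectation (Yc k))"
    proof (rule indep_vars_lebesgue_integral)
      show "indep_vars (\<lambda>_. borel) Yc {i, j}" using indep_vars_subset[OF indc] ij by auto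
      show "\<And>k. k \<in> {i, j} \<Longrightarrow> integrable M (Yc k)"
        using ij intY unfolding Yc_def by auto
    qed simp
    then show ?thesis using ij EYc by simp
  qed
  have ES: "expectation (\<lambda>\<omega>. \<Sum>i\<in>I. Y i \<omega>) = (\<Sum>i\<in>I. c i)"
    unfolding c_def using Bochner_Integration.integral_sum[where I=I and f=Y] intY by simp
  have "variance (\<lambda>\<omega>. \<Sum>i\<in>I. Y i \<omega>) = expectation (\<lambda>\<omega>. (\<Sum>i\<in>I. Yc i \<omega>)\<^sup>2)"
    unfolding ES Yc_def by (simp add: sum_subtractf)
  also have "\<dots> = expectation (\<lambda>\<omega>. \<Sum>i\<in>I. \<Sum>j\<in>I. Yc i \<omega> * Yc j \<omega>)"
    by (simp add: power2_eq_square sum_product)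
  also have "\<dots> = (\<Sum>i\<in>I. \<Sum>j\<in>I. expectation (\<lambda>\<omega>. Yc i \<omega> * Yc j \<omega>))"
    using intYc by (simp add: Bochner_Integration.integral_sum Bochner_Integration.integrable_sum)
  also have "\<dots> = (\<Sum>i\<in>I. expectation (\<lambda>\<omega>. Yc i \<omega> * Yc i \<omega>))"
  proof (rule sum.cong[OF refl])
    fix i assume i: "i \<in> I"
    have "(\<Sum>j\<in>I. expectation (\<lambda>\<omega>. Yc i \<omega> * Yc j \<omega>)) = expectation (\<lambda>\<omega>. Yc i \<omega> * Yc i \<omega>) + (\<Sum>j\<in>I - {i}. expectation (\<lambda>\<omega>. Yc i \<omega> * Yc j \<omega>))"
      using I i by (simp add: sum.remove)
    also have "(\<Sum>j\<in>I - {i}. expectation (\<lambda>\<omega>. Yc i \<omega> * Yc j \<omega>)) = 0"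
      using cross i by (intro sum.neutral) auto
    finally show "(\<Sum>j\<in>I. expectation (\<lambda>\<omega>. Yc i \<omega> * Yc j \<omega>)) = expectation (\<lambda>\<omega>. Yc i \<omega> * Yc i \<omega>)" by simp
  qed
  also have "\<dots> = (\<Sum>i\<in>I. variance (Y i))"
    by (simp add: Yc_def c_def power2_eq_square)
  finally show ?thesis .
qed


lemma min_sq_bound:
  fixes y T b :: real
  assumes "0 \<le> y" "0 < T" "1 < b" "b \<le> 2"
  shows "(min y T)\<^sup>2 \<le> T powr (2 - b) * y powr b"
proof (cases "min y T = 0")
  case True
  have "0 \<le> T powr (2 - b) * y powr b" by simp
  then show ?thesis using True by simp
next
  case False
  define z where "z = min y T"
  have z: "0 < z" "z \<le> T" "z \<le> y" using False assms unfolding z_def by auto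
  have e1: "z powr (2 - b) * z powr b = z powr 2" using powr_add[of z "2 - b" b] by simp
  have e2: "z powr 2 = z\<^sup>2" using powr_realpow[of z 2] z(1) by simp
  have m1: "z powr (2 - b) \<le> T powr (2 - b)" by (rule powr_mono2) (use z assms in auto)
  have m2: "z powr b \<le> y powr b" by (rule powr_mono2) (use z assms in auto)
  have "z powr (2 - b) * z powr b \<le> T powr (2 - b) * y powr b"
    by (rule mult_mono[OF m1 m2]) simp_all
  then show ?thesis using e1 e2 unfolding z_def by simp
qed

context rw
begin

lemma meas_sum_g:
  fixes g :: "real \<Rightarrow> real"
  assumes g: "g \<in> borel_measurable borel"
  shows "(\<lambda>\<omega>. \<Sum>k\<in>{1..n}. g (X k \<omega>)) \<in> borel_measurable M"
  by (intro borel_measurable_sum measurable_compose[OF rvX g]) auto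

lemma hoeff_bound:
  fixes g :: "real \<Rightarrow> real"
  assumes g: "g \<in> borel_measurable borel" and ab: "a < b" "\<And>x. g x \<in> {a..b}" and \<epsilon>: "\<epsilon> \<ge> 0"
    and n: "n \<ge> 1"
  shows "prob {\<omega>\<in>space M. (\<Sum>k\<in>{1..n}. g (X k \<omega>)) / real n \<ge> expectation (\<lambda>\<omega>. g (X 1 \<omega>)) + \<epsilon>}
     \<le> exp (- 2 * real n * \<epsilon>\<^sup>2 / (b - a)\<^sup>2)"
proof -
  interpret H: Hoeffding_ineq_iid M "{1..n}" "\<lambda>k \<omega>. g (X k \<omega>)" "\<lambda>\<omega>. g (X 1 \<omega>)" a b "expectation (\<lambda>\<omega>. g (X 1 \<omega>))"
  proof unfold_locales
    show "finite {1..n}" by simp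
    show "indep_vars (\<lambda>_. borel) (\<lambda>k \<omega>. g (X k \<omega>)) {1..n}" by (rule indep_g[OF _ _ g]) auto
    show "distr M borel (\<lambda>\<omega>. g (X i \<omega>)) = distr M borel (\<lambda>\<omega>. g (X 1 \<omega>))" if "i \<in> {1..n}" for i
      using that by (intro distr_g[OF _ g]) simp
    show "random_variable borel (\<lambda>\<omega>. g (X 1 \<omega>))" using measurable_compose[OF rvX[of 1] g] by simp
    show "AE x in M. g (X 1 x) \<in> {a..b}" using ab(2) by simp
  qed simp
  have "{1..n} \<noteq> {}" using n by simp
  from H.Hoeffding_ineq_ge'[OF \<epsilon> ab(1) this] show ?thesis by simp
qed

lemma hoeff_AE:
  fixes g :: "real \<Rightarrow> real"
  assumes g: "g \<in> borel_measurable borel" and ab: "a < b" "\<And>x. g x \<in> {a..b}" and \<epsilon>: "\<epsilon> > 0"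
  shows "AE \<omega> in M. \<exists>N. \<forall>n\<ge>N. (\<Sum>k\<in>{1..n}. g (X k \<omega>)) < real n * (expectation (\<lambda>\<omega>. g (X 1 \<omega>)) + \<epsilon>)"
proof -
  define Eg where "Eg = expectation (\<lambda>\<omega>. g (X 1 \<omega>))"
  define A where "A n = {\<omega>\<in>space M. (\<Sum>k\<in>{1..n}. g (X k \<omega>)) / real n \<ge> Eg + \<epsilon>}" for n
  have A[measurable]: "A n \<in> sets M" for n
  proof -
    have [measurable]: "(\<lambda>\<omega>. \<Sum>k\<in>{1..n}. g (X k \<omega>)) \<in> borel_measurable M" by (rule meas_sum_g[OF g])
    show ?thesis unfolding A_def by measurable
  qed
  define \<kappa> where "\<kappa> = 2 * \<epsilon>\<^sup>2 / (b - a)\<^sup>2"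
  have \<kappa>: "\<kappa> > 0" unfolding \<kappa>_def using \<epsilon> ab by simp
  have bound: "norm (measure M (A n)) \<le> exp (- \<kappa>) ^ n" if "n \<ge> 1" for n
  proof -
    have "measure M (A n) \<le> exp (- 2 * real n * \<epsilon>\<^sup>2 / (b - a)\<^sup>2)"
      unfolding A_def Eg_def using hoeff_bound[OF g ab _ that] \<epsilon> by simp
    also have "\<dots> = exp (- \<kappa>) ^ n" unfolding \<kappa>_def by (simp add: exp_of_nat_mult[symmetric] algebra_simps)
    finally show ?thesis by simp
  qed
  have "summable (\<lambda>n. exp (- \<kappa>) ^ n)" using \<kappa> by (intro summable_geometric) simp
  then have "summable (\<lambda>n. measure M (A n))"
    by (rule summable_comparison_test'[where N=1]) (use bound in auto)
  then have "AE \<omega> in M. eventually (\<lambda>n. \<omega> \<in> space M - A n) sequentially"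
    by (intro borel_cantelli_AE1) (auto simp: emeasure_eq_measure)
  then show ?thesis
  proof (rule AE_mp[OF _ AE_I2[OF impI]])
    fix \<omega> assume "\<omega> \<in> space M" and ev: "eventually (\<lambda>n. \<omega> \<in> space M - A n) sequentially"
    then obtain N where N: "\<And>n. n \<ge> N \<Longrightarrow> \<omega> \<in> space M - A n" unfolding eventually_sequentially by blast
    have "(\<Sum>k\<in>{1..n}. g (X k \<omega>)) < real n * (Eg + \<epsilon>)" if "n \<ge> Suc N" for n
    proof -
      have "\<not> (\<Sum>k\<in>{1..n}. g (X k \<omega>)) / real n \<ge> Eg + \<epsilon>" using N[of n] that \<open>\<omega> \<in> space M\<close> unfolding A_def by auto
      then have "(\<Sum>k\<in>{1..n}. g (X k \<omega>)) / real n < Eg + \<epsilon>" by simp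
      moreover have "real n > 0" using that by simp
      ultimately show ?thesis by (simp add: divide_less_eq mult.commute)
    qed
    then show "\<exists>N. \<forall>n\<ge>N. (\<Sum>k\<in>{1..n}. g (X k \<omega>)) < real n * (expectation (\<lambda>\<omega>. g (X 1 \<omega>)) + \<epsilon>)"
      unfolding Eg_def by blast
  qed
qed

end

lemma pow2_between: fixes n :: nat assumes "n \<ge> 1" shows "\<exists>j. n \<le> 2 ^ j \<and> 2 ^ j < 2 * n"
proof -
  obtain i where i: "2 ^ i \<le> n" "n < 2 ^ (i + 1)" using ex_power_ivl1[of 2 n] assms by auto
  show ?thesis
  proof (cases "2 ^ i = n")
    case True then show ?thesis using assms by (intro exI[of _ i]) auto
  next
    case False
    then have "2 ^ i < n" using i by simp
    then show ?thesis using i by (intro exI[of _ "i + 1"]) auto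
  qed
qed

lemma powr_N_simp1: assumes "N > (0::real)" shows "N * (C / N powr b) = C * N powr (1 - b)"
proof -
  have "N powr (1 - b) = N / N powr b" using powr_diff[of N 1 b] powr_one[of N] assms by simp
  then show ?thesis by (simp add: field_simps)
qed

lemma powr_N_simp2: assumes "N > (0::real)" "e > 0"
  shows "N * (N powr (2 - b) * C) / (N * e)\<^sup>2 = C * N powr (1 - b) / e\<^sup>2"
proof -
  have "N powr (1 - b) = N powr (2 - b) / N" using powr_diff[of N 2 1] powr_diff[of N "2 - b" 1] powr_one[of N] assms
    by (smt (verit, ccfv_threshold) powr_diff)
  then show ?thesis using assms by (simp add: field_simps power2_eq_square)
qed

context rw
begin

lemma var_iid:
  fixes h :: "real \<Rightarrow> real"
  assumes k: "k \<ge> 1" and h[measurable]: "h \<in> borel_measurable borel"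
  shows "variance (\<lambda>\<omega>. h (X k \<omega>)) = variance (\<lambda>\<omega>. h (X 1 \<omega>))"
proof -
  have c: "expectation (\<lambda>\<omega>. h (X k \<omega>)) = expectation (\<lambda>\<omega>. h (X 1 \<omega>))" by (rule exp_iid[OF k h])
  have "variance (\<lambda>\<omega>. h (X k \<omega>)) = expectation (\<lambda>\<omega>. (\<lambda>x. (h x - expectation (\<lambda>\<omega>. h (X 1 \<omega>)))\<^sup>2) (X k \<omega>))"
    unfolding c by simp
  also have "\<dots> = expectation (\<lambda>\<omega>. (\<lambda>x. (h x - expectation (\<lambda>\<omega>. h (X 1 \<omega>)))\<^sup>2) (X 1 \<omega>))"
    by (rule exp_iid[OF k]) measurable
  finally show ?thesis by simp
qed

lemma W_bound:
  fixes g :: "real \<Rightarrow> real" and b \<epsilon> :: real and N :: nat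
  assumes g[measurable]: "g \<in> borel_measurable borel" and gnn: "\<And>x. g x \<ge> 0" and b: "1 < b" "b \<le> 2"
    and intb: "integrable M (\<lambda>\<omega>. g (X 1 \<omega>) powr b)" and int1: "integrable M (\<lambda>\<omega>. g (X 1 \<omega>))"
    and \<epsilon>: "\<epsilon> > 0" and N: "N \<ge> 1"
  shows "prob {\<omega>\<in>space M. (\<Sum>k\<in>{1..N}. g (X k \<omega>)) > real N * (expectation (\<lambda>\<omega>. g (X 1 \<omega>)) + \<epsilon>)}
    \<le> expectation (\<lambda>\<omega>. g (X 1 \<omega>) powr b) * (1 + 1 / \<epsilon>\<^sup>2) * real N powr (1 - b)"
proof -
  define T where "T = real N"
  have T: "T > 0" using N unfolding T_def by simp
  define Eg where "Eg = expectation (\<lambda>\<omega>. g (X 1 \<omega>))"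
  define Cb where "Cb = expectation (\<lambda>\<omega>. g (X 1 \<omega>) powr b)"
  define h where "h x = min (g x) T" for x
  have h[measurable]: "h \<in> borel_measurable borel" unfolding h_def by measurable
  have hb: "\<bar>h x\<bar> \<le> T" "0 \<le> h x" "h x \<le> g x" for x using gnn[of x] T unfolding h_def by auto
  have X1[measurable]: "X 1 \<in> borel_measurable M" using rvX by simp
  have rvh: "k \<ge> 1 \<Longrightarrow> (\<lambda>\<omega>. h (X k \<omega>)) \<in> borel_measurable M" for k using measurable_compose[OF rvX h] by simp
  have inth: "k \<ge> 1 \<Longrightarrow> integrable M (\<lambda>\<omega>. h (X k \<omega>))" for k
    by (rule integrable_const_bound[where B=T]) (use hb rvh in \<open>auto intro: AE_I2\<close>)
  define V where "V \<omega> = (\<Sum>k\<in>{1..N}. h (X k \<omega>))" for \<omega>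
  have rvV[measurable]: "V \<in> borel_measurable M" unfolding V_def by (intro borel_measurable_sum rvh) auto
  define Eh where "Eh = expectation (\<lambda>\<omega>. h (X 1 \<omega>))"
  have EV: "expectation V = T * Eh"
  proof -
    have "expectation V = (\<Sum>k\<in>{1..N}. expectation (\<lambda>\<omega>. h (X k \<omega>)))"
      unfolding V_def by (rule Bochner_Integration.integral_sum) (use inth in auto)
    also have "\<dots> = (\<Sum>k\<in>{1..N}. Eh)" unfolding Eh_def by (intro sum.cong refl exp_iid[OF _ h]) auto
    finally show ?thesis by (simp add: T_def)
  qed
  have Eh_le: "Eh \<le> Eg" unfolding Eh_def Eg_def by (rule integral_mono[OF inth int1]) (use hb in auto)
  define Bs where "Bs = (\<Union>k\<in>{1..N}. {\<omega>\<in>space M. g (X k \<omega>) > T})"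
  define Cs where "Cs = {\<omega>\<in>space M. \<bar>V \<omega> - expectation V\<bar> \<ge> T * \<epsilon>}"
  have Bk[measurable]: "{\<omega>\<in>space M. g (X k \<omega>) > T} \<in> sets M" if "k \<ge> 1" for k
  proof -
    have [measurable]: "X k \<in> borel_measurable M" using rvX[OF that] .
    show ?thesis by measurable
  qed
  have Bs[measurable]: "Bs \<in> sets M" unfolding Bs_def using Bk by auto
  have Cs[measurable]: "Cs \<in> sets M" unfolding Cs_def by measurable
  have sub: "{\<omega>\<in>space M. (\<Sum>k\<in>{1..N}. g (X k \<omega>)) > real N * (Eg + \<epsilon>)} \<subseteq> Bs \<union> Cs"
  proof
    fix \<omega> assume \<omega>: "\<omega> \<in> {\<omega>\<in>space M. (\<Sum>k\<in>{1..N}. g (X k \<omega>)) > real N * (Eg + \<epsilon>)}"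
    show "\<omega> \<in> Bs \<union> Cs"
    proof (cases "\<omega> \<in> Bs")
      case False
      then have "g (X k \<omega>) \<le> T" if "k \<in> {1..N}" for k using \<omega> that unfolding Bs_def by (auto simp: not_less)
      then have "V \<omega> = (\<Sum>k\<in>{1..N}. g (X k \<omega>))" unfolding V_def h_def by (intro sum.cong) auto
      then have "V \<omega> > T * (Eg + \<epsilon>)" using \<omega> unfolding T_def by simp
      moreover have "T * Eh \<le> T * Eg" using Eh_le T by simp
      ultimately have "V \<omega> - expectation V \<ge> T * \<epsilon>" unfolding EV by (simp add: algebra_simps)
      then show ?thesis using \<omega> unfolding Cs_def by auto
    qed simp
  qed
  have PB: "prob Bs \<le> T * (Cb / T powr b)"
  proof -
    have "prob Bs \<le> (\<Sum>k\<in>{1..N}. prob {\<omega>\<in>space M. g (X k \<omega>) > T})"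
      unfolding Bs_def by (rule finite_measure_subadditive_finite) (use Bk in auto)
    also have "\<dots> = (\<Sum>k\<in>{1..N}. prob {\<omega>\<in>space M. g (X 1 \<omega>) > T})"
    proof (rule sum.cong[OF refl])
      fix k assume k: "k \<in> {1..N}"
      have S: "{x. T < g x} \<in> sets borel"
      proof -
        have "{x\<in>space borel. T < g x} \<in> sets borel" by measurable
        then show ?thesis by simp
      qed
      show "prob {\<omega>\<in>space M. g (X k \<omega>) > T} = prob {\<omega>\<in>space M. g (X 1 \<omega>) > T}"
        using prob_iid[OF _ S, of k] k by simp
    qed
    also have "\<dots> = T * prob {\<omega>\<in>space M. g (X 1 \<omega>) > T}" by (simp add: T_def)
    also have "\<dots> \<le> T * (Cb / T powr b)"
    proof (rule mult_left_mono)
      have "prob {\<omega>\<in>space M. g (X 1 \<omega>) > T} \<le> prob {\<omega>\<in>space M. g (X 1 \<omega>) powr b \<ge> T powr b}"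
      proof (rule finite_measure_mono)
        show "{\<omega>\<in>space M. g (X 1 \<omega>) > T} \<subseteq> {\<omega>\<in>space M. g (X 1 \<omega>) powr b \<ge> T powr b}"
          using T b by (auto intro!: powr_mono2)
        show "{\<omega>\<in>space M. g (X 1 \<omega>) powr b \<ge> T powr b} \<in> sets M" by measurable
      qed
      also have "\<dots> \<le> Cb / T powr b" unfolding Cb_def
        by (rule integral_Markov_inequality_measure[OF intb, where A="space M"]) (use T in auto)
      finally show "prob {\<omega>\<in>space M. g (X 1 \<omega>) > T} \<le> Cb / T powr b" .
    qed (use T in simp)
    finally show ?thesis .
  qed
  have varV: "variance V = T * variance (\<lambda>\<omega>. h (X 1 \<omega>))"
  proof -
    have "variance V = (\<Sum>k\<in>{1..N}. variance (\<lambda>\<omega>. h (X k \<omega>)))"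
      unfolding V_def
    proof (rule var_sum[where T=T])
      show "indep_vars (\<lambda>_. borel) (\<lambda>k \<omega>. h (X k \<omega>)) {1..N}" by (rule indep_g[OF _ _ h]) auto
    qed (use hb in auto)
    also have "\<dots> = (\<Sum>k\<in>{1..N}. variance (\<lambda>\<omega>. h (X 1 \<omega>)))"
      by (intro sum.cong refl var_iid[OF _ h]) auto
    finally show ?thesis by (simp add: T_def)
  qed
  have var1: "variance (\<lambda>\<omega>. h (X 1 \<omega>)) \<le> T powr (2 - b) * Cb"
  proof -
    have i2: "integrable M (\<lambda>\<omega>. (h (X 1 \<omega>))\<^sup>2)"
      by (rule integrable_const_bound[where B="T * T"])
         (use hb rvh[of 1] T in \<open>auto intro!: AE_I2 mult_mono simp: power2_eq_square abs_mult\<close>)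
    have "variance (\<lambda>\<omega>. h (X 1 \<omega>)) = expectation (\<lambda>\<omega>. (h (X 1 \<omega>))\<^sup>2) - (expectation (\<lambda>\<omega>. h (X 1 \<omega>)))\<^sup>2"
      by (rule variance_eq[OF inth[of 1] i2]) simp
    also have "\<dots> \<le> expectation (\<lambda>\<omega>. (h (X 1 \<omega>))\<^sup>2)" by simp
    also have "\<dots> \<le> expectation (\<lambda>\<omega>. T powr (2 - b) * g (X 1 \<omega>) powr b)"
      by (rule integral_mono[OF i2]) (use intb min_sq_bound[OF gnn T b] in \<open>auto simp: h_def\<close>)
    also have "\<dots> = T powr (2 - b) * Cb" unfolding Cb_def by simp
    finally show ?thesis .
  qed
  have PC: "prob Cs \<le> T * (T powr (2 - b) * Cb) / (T * \<epsilon>)\<^sup>2"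
  proof -
    have i2: "integrable M (\<lambda>\<omega>. (V \<omega>)\<^sup>2)"
    proof (rule integrable_const_bound[where B="(T * T) * (T * T)"])
      have "\<bar>V \<omega>\<bar> \<le> T * T" for \<omega>
      proof -
        have "\<bar>V \<omega>\<bar> \<le> (\<Sum>k\<in>{1..N}. \<bar>h (X k \<omega>)\<bar>)" unfolding V_def by (rule sum_abs)
        also have "\<dots> \<le> (\<Sum>k\<in>{1..N}. T)" by (intro sum_mono hb)
        finally show ?thesis by (simp add: T_def)
      qed
      then have "\<bar>V \<omega>\<bar> * \<bar>V \<omega>\<bar> \<le> (T * T) * (T * T)" for \<omega>
        using T by (intro mult_mono) auto
      then show "AE \<omega> in M. norm ((V \<omega>)\<^sup>2) \<le> (T * T) * (T * T)"
        by (intro AE_I2) (simp add: power2_eq_square abs_mult)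
    qed simp
    have "prob Cs \<le> variance V / (T * \<epsilon>)\<^sup>2"
      unfolding Cs_def by (rule Chebyshev_inequality[OF rvV i2]) (use T \<epsilon> in simp)
    also have "\<dots> \<le> T * (T powr (2 - b) * Cb) / (T * \<epsilon>)\<^sup>2"
      unfolding varV using var1 T by (intro divide_right_mono mult_left_mono) auto
    finally show ?thesis .
  qed
  have "prob {\<omega>\<in>space M. (\<Sum>k\<in>{1..N}. g (X k \<omega>)) > real N * (Eg + \<epsilon>)} \<le> prob (Bs \<union> Cs)"
    by (rule finite_measure_mono[OF sub]) simp
  also have "\<dots> \<le> prob Bs + prob Cs" by (rule measure_Un_le) simp_all
  also have "\<dots> \<le> T * (Cb / T powr b) + T * (T powr (2 - b) * Cb) / (T * \<epsilon>)\<^sup>2"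
    using PB PC by simp
  also have "\<dots> = Cb * T powr (1 - b) + Cb * T powr (1 - b) / \<epsilon>\<^sup>2"
    using powr_N_simp1[OF T] powr_N_simp2[OF T \<epsilon>] by simp
  also have "\<dots> = Cb * (1 + 1 / \<epsilon>\<^sup>2) * T powr (1 - b)" by (simp add: field_simps)
  finally show ?thesis unfolding Eg_def Cb_def T_def .
qed

end

lemma pow_powr_eq: assumes "1 < b" shows "real (2 ^ j) powr (1 - b) = (2 powr (1 - b)) ^ j"
proof -
  have "real (2 ^ j) = 2 powr real j" by (simp add: powr_realpow)
  then have "real (2 ^ j) powr (1 - b) = 2 powr (real j * (1 - b))" by (simp add: powr_powr)
  also have "\<dots> = (2 powr (1 - b)) powr real j" by (simp add: powr_powr mult.commute)
  also have "\<dots> = (2 powr (1 - b)) ^ j" by (rule powr_realpow) simp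
  finally show ?thesis .
qed

context rw
begin

lemma W_AE:
  fixes g :: "real \<Rightarrow> real" and b \<epsilon> :: real
  assumes g[measurable]: "g \<in> borel_measurable borel" and gnn: "\<And>x. g x \<ge> 0" and b: "1 < b" "b \<le> 2"
    and intb: "integrable M (\<lambda>\<omega>. g (X 1 \<omega>) powr b)" and int1: "integrable M (\<lambda>\<omega>. g (X 1 \<omega>))"
    and \<epsilon>: "\<epsilon> > 0"
  shows "AE \<omega> in M. \<exists>N. \<forall>n\<ge>N. (\<Sum>k\<in>{1..n}. g (X k \<omega>)) \<le> 2 * real n * (expectation (\<lambda>\<omega>. g (X 1 \<omega>)) + \<epsilon>)"
proof -
  define Eg where "Eg = expectation (\<lambda>\<omega>. g (X 1 \<omega>))"
  define K where "K = expectation (\<lambda>\<omega>. g (X 1 \<omega>) powr b) * (1 + 1 / \<epsilon>\<^sup>2)"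
  define r where "r = (2::real) powr (1 - b)"
  have r: "r < 1" "0 \<le> r" unfolding r_def using b by (auto intro!: powr_less_one)
  define A where "A j = {\<omega>\<in>space M. (\<Sum>k\<in>{1..2^j}. g (X k \<omega>)) > real (2 ^ j) * (Eg + \<epsilon>)}" for j
  have A[measurable]: "A j \<in> sets M" for j
  proof -
    have [measurable]: "(\<lambda>\<omega>. \<Sum>k\<in>{1..2^j}. g (X k \<omega>)) \<in> borel_measurable M" by (rule meas_sum_g[OF g])
    show ?thesis unfolding A_def by measurable
  qed
  have bound: "norm (measure M (A j)) \<le> K * r ^ j" for j
  proof -
    have "measure M (A j) \<le> K * real (2 ^ j) powr (1 - b)"
      unfolding A_def Eg_def K_def using W_bound[OF g gnn b intb int1 \<epsilon>, of "2 ^ j"] by simp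
    then show ?thesis unfolding r_def pow_powr_eq[OF b(1)] by simp
  qed
  have "summable (\<lambda>j. K * r ^ j)" using r by (intro summable_mult summable_geometric) simp
  then have "summable (\<lambda>j. measure M (A j))"
    by (rule summable_comparison_test'[where N=0]) (use bound in auto)
  then have "AE \<omega> in M. eventually (\<lambda>j. \<omega> \<in> space M - A j) sequentially"
    by (intro borel_cantelli_AE1) (auto simp: emeasure_eq_measure)
  then show ?thesis
  proof (rule AE_mp[OF _ AE_I2[OF impI]])
    fix \<omega> assume "\<omega> \<in> space M" and ev: "eventually (\<lambda>j. \<omega> \<in> space M - A j) sequentially"
    then obtain J where J: "\<And>j. j \<ge> J \<Longrightarrow> \<omega> \<in> space M - A j" unfolding eventually_sequentially by blast
    have Eg0: "Eg \<ge> 0" unfolding Eg_def using gnn by simp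
    have "(\<Sum>k\<in>{1..n}. g (X k \<omega>)) \<le> 2 * real n * (Eg + \<epsilon>)" if n: "n \<ge> 2 ^ J" for n
    proof -
      have n1: "n \<ge> 1" using n by (metis one_le_numeral one_le_power order_trans)
      obtain j where j: "n \<le> 2 ^ j" "2 ^ j < 2 * n" using pow2_between[OF n1] by blast
      have "J \<le> j"
      proof (rule ccontr)
        assume "\<not> J \<le> j"
        then have "(2::nat) ^ j < 2 ^ J" by (intro power_strict_increasing) auto
        then show False using j(1) n by linarith
      qed
      then have "\<omega> \<notin> A j" using J by blast
      then have le: "(\<Sum>k\<in>{1..2^j}. g (X k \<omega>)) \<le> real (2 ^ j) * (Eg + \<epsilon>)"
        using \<open>\<omega> \<in> space M\<close> unfolding A_def by (auto simp: not_less)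
      have "(\<Sum>k\<in>{1..n}. g (X k \<omega>)) \<le> (\<Sum>k\<in>{1..2^j}. g (X k \<omega>))"
        by (rule sum_mono2) (use j gnn in auto)
      also have "\<dots> \<le> real (2 ^ j) * (Eg + \<epsilon>)" by (rule le)
      also have "\<dots> \<le> 2 * real n * (Eg + \<epsilon>)"
      proof (rule mult_right_mono)
        have "2 ^ j \<le> 2 * n" using j(2) by linarith
        then show "real (2 ^ j) \<le> 2 * real n" by (metis of_nat_le_iff of_nat_mult of_nat_numeral)
      qed (use Eg0 \<epsilon> in simp)
      finally show ?thesis .
    qed
    then show "\<exists>N. \<forall>n\<ge>N. (\<Sum>k\<in>{1..n}. g (X k \<omega>)) \<le> 2 * real n * (expectation (\<lambda>\<omega>. g (X 1 \<omega>)) + \<epsilon>)"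
      unfolding Eg_def by blast
  qed
qed

end

lemma powr_le_aux:
  fixes w x b' \<beta> :: real
  assumes "0 \<le> w" "w \<le> \<bar>x\<bar>" "1 < b'" "b' \<le> \<beta>"
  shows "w powr b' \<le> 1 + \<bar>x\<bar> powr \<beta>"
proof -
  have "w powr b' \<le> \<bar>x\<bar> powr b'" by (rule powr_mono2) (use assms in auto)
  also have "\<dots> \<le> 1 + \<bar>x\<bar> powr \<beta>"
  proof (cases "\<bar>x\<bar> \<le> 1")
    case True
    then have "\<bar>x\<bar> powr b' \<le> 1 powr b'" by (intro powr_mono2) (use assms in auto)
    moreover have "0 \<le> \<bar>x\<bar> powr \<beta>" by simp
    ultimately show ?thesis by (simp add: add_increasing2)
  next
    case False
    then have "\<bar>x\<bar> powr b' \<le> \<bar>x\<bar> powr \<beta>" by (intro powr_mono) (use assms in auto)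
    then show ?thesis by simp
  qed
  finally show ?thesis .
qed

lemma down_of_drift:
  fixes s :: "nat \<Rightarrow> real"
  assumes \<mu>: "\<mu> > 0" and N: "\<forall>n\<ge>N. s n \<le> - (\<mu> / 2) * real n"
  shows "\<And>c a. \<exists>n\<ge>a. s n < c" and "\<exists>B. \<forall>k. s k \<le> B"
proof -
  fix c :: real and a :: nat
  obtain n0 :: nat where n0: "2 * \<bar>c\<bar> / \<mu> < real n0" using reals_Archimedean2[of "2 * \<bar>c\<bar> / \<mu>"] by auto
  define n where "n = max a (max N n0)"
  have "n \<ge> N" "n \<ge> n0" "n \<ge> a" unfolding n_def by auto
  then have sn: "s n \<le> - (\<mu> / 2) * real n" using N by blast
  have "2 * \<bar>c\<bar> / \<mu> < real n" using n0 \<open>n \<ge> n0\<close> by linarith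
  then have "2 * \<bar>c\<bar> < real n * \<mu>" using \<mu> by (simp add: divide_less_eq)
  then have "s n < c" using sn by (simp add: algebra_simps)
  then show "\<exists>n\<ge>a. s n < c" using \<open>n \<ge> a\<close> by blast
next
  define B where "B = (\<Sum>k<N. \<bar>s k\<bar>)"
  have B0: "B \<ge> 0" unfolding B_def by (simp add: sum_nonneg)
  have "s k \<le> B" for k
  proof (cases "k < N")
    case True
    then have "\<bar>s k\<bar> \<le> B" unfolding B_def by (intro member_le_sum) auto
    then show ?thesis by linarith
  next
    case False
    then have "s k \<le> - (\<mu> / 2) * real k" using N by simp
    moreover have "0 \<le> (\<mu> / 2) * real k" using \<mu> by simp
    ultimately show ?thesis using B0 by linarith
  qed
  then show "\<exists>B. \<forall>k. s k \<le> B" by blast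
qed

definition Zc :: "real \<Rightarrow> real \<Rightarrow> real" where "Zc c x = max (- c) (min x c)"
definition Wc :: "real \<Rightarrow> real \<Rightarrow> real" where "Wc c x = max 0 (x - c)"

lemma Zc_bound: "0 \<le> c \<Longrightarrow> \<bar>Zc c x\<bar> \<le> \<bar>x\<bar>" by (auto simp: Zc_def max_def min_def)
lemma Wc_bound: "0 \<le> c \<Longrightarrow> \<bar>Wc c x\<bar> \<le> \<bar>x\<bar>" by (auto simp: Wc_def max_def)
lemma Wc_nn: "0 \<le> Wc c x" by (simp add: Wc_def)
lemma Zc_range: "0 \<le> c \<Longrightarrow> Zc c x \<in> {-c..c}" by (auto simp: Zc_def)
lemma ZW_split: "0 \<le> c \<Longrightarrow> x \<le> Zc c x + Wc c x" by (auto simp: Zc_def Wc_def max_def min_def)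
lemma Zc_eq: "\<bar>x\<bar> \<le> c \<Longrightarrow> Zc c x = x" by (auto simp: Zc_def max_def min_def)
lemma Wc_eq: "\<bar>x\<bar> \<le> c \<Longrightarrow> Wc c x = 0" by (auto simp: Wc_def max_def)

lemma Zc_lim: "(\<lambda>n. Zc (real (Suc n)) x) \<longlonglongrightarrow> x"
proof (rule tendsto_eventually)
  obtain n0 :: nat where "\<bar>x\<bar> < real n0" using reals_Archimedean2 by blast
  then have "\<forall>n\<ge>n0. Zc (real (Suc n)) x = x" by (intro allI impI Zc_eq) auto
  then show "eventually (\<lambda>n. Zc (real (Suc n)) x = x) sequentially" unfolding eventually_sequentially by blast
qed

lemma Wc_lim: "(\<lambda>n. Wc (real (Suc n)) x) \<longlonglongrightarrow> 0"
proof (rule tendsto_eventually)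
  obtain n0 :: nat where "\<bar>x\<bar> < real n0" using reals_Archimedean2 by blast
  then have "\<forall>n\<ge>n0. Wc (real (Suc n)) x = 0" by (intro allI impI Wc_eq) auto
  then show "eventually (\<lambda>n. Wc (real (Suc n)) x = 0) sequentially" unfolding eventually_sequentially by blast
qed


context rw
begin

lemma choose_c:
  assumes int1: "integrable M (X 1)" and mean: "expectation (X 1) = 0"
  shows "\<exists>c>0. expectation (\<lambda>\<omega>. Zc c (X 1 \<omega>)) < \<mu> / 8 \<and> expectation (\<lambda>\<omega>. Wc c (X 1 \<omega>)) < \<mu> / 16"
proof -
  have X1[measurable]: "X 1 \<in> borel_measurable M" using rvX by simp
  have mZ[measurable]: "Zc c \<in> borel_measurable borel" for c unfolding Zc_def[abs_def] by measurable
  have mW[measurable]: "Wc c \<in> borel_measurable borel" for c unfolding Wc_def[abs_def] by measurable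
  have L1: "(\<lambda>n. expectation (\<lambda>\<omega>. Zc (real (Suc n)) (X 1 \<omega>))) \<longlonglongrightarrow> expectation (X 1)"
  proof (rule integral_dominated_convergence[where w="\<lambda>\<omega>. \<bar>X 1 \<omega>\<bar>"])
    show "integrable M (\<lambda>\<omega>. \<bar>X 1 \<omega>\<bar>)" using int1 by simp
    show "AE \<omega> in M. (\<lambda>n. Zc (real (Suc n)) (X 1 \<omega>)) \<longlonglongrightarrow> X 1 \<omega>" by (intro AE_I2 Zc_lim)
    show "AE \<omega> in M. norm (Zc (real (Suc n)) (X 1 \<omega>)) \<le> \<bar>X 1 \<omega>\<bar>" for n
      by (intro AE_I2) (simp add: Zc_bound)
  qed simp_all
  have L2: "(\<lambda>n. expectation (\<lambda>\<omega>. Wc (real (Suc n)) (X 1 \<omega>))) \<longlonglongrightarrow> expectation (\<lambda>\<omega>. 0)"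
  proof (rule integral_dominated_convergence[where w="\<lambda>\<omega>. \<bar>X 1 \<omega>\<bar>"])
    show "integrable M (\<lambda>\<omega>. \<bar>X 1 \<omega>\<bar>)" using int1 by simp
    show "AE \<omega> in M. (\<lambda>n. Wc (real (Suc n)) (X 1 \<omega>)) \<longlonglongrightarrow> 0" by (intro AE_I2 Wc_lim)
    show "AE \<omega> in M. norm (Wc (real (Suc n)) (X 1 \<omega>)) \<le> \<bar>X 1 \<omega>\<bar>" for n
      by (intro AE_I2) (simp add: Wc_bound)
  qed simp_all
  have "eventually (\<lambda>n. expectation (\<lambda>\<omega>. Zc (real (Suc n)) (X 1 \<omega>)) < \<mu> / 8) sequentially"
    using order_tendstoD(2)[OF L1, of "\<mu> / 8"] mean mu_pos by simp
  moreover have "eventually (\<lambda>n. expectation (\<lambda>\<omega>. Wc (real (Suc n)) (X 1 \<omega>)) < \<mu> / 16) sequentially"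
    using order_tendstoD(2)[OF L2, of "\<mu> / 16"] mu_pos by simp
  ultimately have "eventually (\<lambda>n. expectation (\<lambda>\<omega>. Zc (real (Suc n)) (X 1 \<omega>)) < \<mu> / 8 \<and>
      expectation (\<lambda>\<omega>. Wc (real (Suc n)) (X 1 \<omega>)) < \<mu> / 16) sequentially"
    by (rule eventually_conj)
  then obtain n where "expectation (\<lambda>\<omega>. Zc (real (Suc n)) (X 1 \<omega>)) < \<mu> / 8"
      "expectation (\<lambda>\<omega>. Wc (real (Suc n)) (X 1 \<omega>)) < \<mu> / 16"
    unfolding eventually_sequentially by blast
  then show ?thesis by (intro exI[of _ "real (Suc n)"]) simp
qed

lemma drift_AE:
  assumes int1: "integrable M (X 1)" and mean: "expectation (X 1) = 0"
    and \<beta>: "\<beta> > 1" and int\<beta>: "integrable M (\<lambda>\<omega>. \<bar>X 1 \<omega>\<bar> powr \<beta>)"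
  shows "AE \<omega> in M. \<exists>N. \<forall>n\<ge>N. Sdrift X \<mu> n \<omega> \<le> - (\<mu> / 2) * real n"
proof -
  have X1[measurable]: "X 1 \<in> borel_measurable M" using rvX by simp
  obtain c where c: "c > 0" "expectation (\<lambda>\<omega>. Zc c (X 1 \<omega>)) < \<mu> / 8" "expectation (\<lambda>\<omega>. Wc c (X 1 \<omega>)) < \<mu> / 16"
    using choose_c[OF int1 mean] by blast
  have mZ[measurable]: "Zc c \<in> borel_measurable borel" unfolding Zc_def[abs_def] by measurable
  have mW[measurable]: "Wc c \<in> borel_measurable borel" unfolding Wc_def[abs_def] by measurable
  define b where "b = min \<beta> 2"
  have b: "1 < b" "b \<le> 2" "b \<le> \<beta>" using \<beta> unfolding b_def by auto
  have HZ: "AE \<omega> in M. \<exists>N. \<forall>n\<ge>N. (\<Sum>k\<in>{1..n}. Zc c (X k \<omega>)) < real n * (expectation (\<lambda>\<omega>. Zc c (X 1 \<omega>)) + \<mu> / 8)"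
  proof (rule hoeff_AE[OF mZ])
    show "Zc c x \<in> {- c..c}" for x using Zc_range[of c x] c by simp
  qed (use c mu_pos in auto)
  have intW1: "integrable M (\<lambda>\<omega>. Wc c (X 1 \<omega>))"
    by (rule Bochner_Integration.integrable_bound[OF int1]) (use c Wc_bound in \<open>auto intro: AE_I2\<close>)
  have intWb: "integrable M (\<lambda>\<omega>. Wc c (X 1 \<omega>) powr b)"
  proof (rule Bochner_Integration.integrable_bound[where f="\<lambda>\<omega>. 1 + \<bar>X 1 \<omega>\<bar> powr \<beta>"])
    show "integrable M (\<lambda>\<omega>. 1 + \<bar>X 1 \<omega>\<bar> powr \<beta>)" using int\<beta> by simp
    show "(\<lambda>\<omega>. Wc c (X 1 \<omega>) powr b) \<in> borel_measurable M" by measurable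
    have "norm (Wc c x powr b) \<le> norm (1 + \<bar>x\<bar> powr \<beta>)" for x
    proof -
      have "Wc c x powr b \<le> 1 + \<bar>x\<bar> powr \<beta>"
        by (rule powr_le_aux) (use Wc_nn Wc_bound[of c x] c b in auto)
      moreover have "0 \<le> 1 + \<bar>x\<bar> powr \<beta>" by (simp add: add_nonneg_nonneg)
      ultimately show ?thesis by simp
    qed
    then show "AE \<omega> in M. norm (Wc c (X 1 \<omega>) powr b) \<le> norm (1 + \<bar>X 1 \<omega>\<bar> powr \<beta>)" by (intro AE_I2) simp
  qed
  have HW: "AE \<omega> in M. \<exists>N. \<forall>n\<ge>N. (\<Sum>k\<in>{1..n}. Wc c (X k \<omega>)) \<le> 2 * real n * (expectation (\<lambda>\<omega>. Wc c (X 1 \<omega>)) + \<mu> / 16)"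
    by (rule W_AE[OF mW Wc_nn b(1,2) intWb intW1]) (use mu_pos in simp)
  show ?thesis
  proof (rule eventually_mono[OF eventually_conj[OF HZ HW]])
    fix \<omega> assume "(\<exists>N. \<forall>n\<ge>N. (\<Sum>k\<in>{1..n}. Zc c (X k \<omega>)) < real n * (expectation (\<lambda>\<omega>. Zc c (X 1 \<omega>)) + \<mu> / 8)) \<and>
      (\<exists>N. \<forall>n\<ge>N. (\<Sum>k\<in>{1..n}. Wc c (X k \<omega>)) \<le> 2 * real n * (expectation (\<lambda>\<omega>. Wc c (X 1 \<omega>)) + \<mu> / 16))"
    then obtain N1 N2 where
      N1: "\<And>n. n \<ge> N1 \<Longrightarrow> (\<Sum>k\<in>{1..n}. Zc c (X k \<omega>)) < real n * (expectation (\<lambda>\<omega>. Zc c (X 1 \<omega>)) + \<mu> / 8)" and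
      N2: "\<And>n. n \<ge> N2 \<Longrightarrow> (\<Sum>k\<in>{1..n}. Wc c (X k \<omega>)) \<le> 2 * real n * (expectation (\<lambda>\<omega>. Wc c (X 1 \<omega>)) + \<mu> / 16)"
      by blast
    have "Sdrift X \<mu> n \<omega> \<le> - (\<mu> / 2) * real n" if n: "n \<ge> max N1 N2" for n
    proof -
      have "(\<Sum>k\<in>{1..n}. X k \<omega>) \<le> (\<Sum>k\<in>{1..n}. Zc c (X k \<omega>) + Wc c (X k \<omega>))"
        by (intro sum_mono ZW_split) (use c in simp)
      also have "\<dots> = (\<Sum>k\<in>{1..n}. Zc c (X k \<omega>)) + (\<Sum>k\<in>{1..n}. Wc c (X k \<omega>))" by (rule sum.distrib)
      finally have S: "(\<Sum>k\<in>{1..n}. X k \<omega>) \<le> (\<Sum>k\<in>{1..n}. Zc c (X k \<omega>)) + (\<Sum>k\<in>{1..n}. Wc c (X k \<omega>))" .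
      have z: "(\<Sum>k\<in>{1..n}. Zc c (X k \<omega>)) \<le> real n * (\<mu> / 4)"
      proof -
        have "(\<Sum>k\<in>{1..n}. Zc c (X k \<omega>)) \<le> real n * (expectation (\<lambda>\<omega>. Zc c (X 1 \<omega>)) + \<mu> / 8)"
          using N1[of n] n by simp
        also have "\<dots> \<le> real n * (\<mu> / 4)" using c(2) by (intro mult_left_mono) auto
        finally show ?thesis .
      qed
      have w: "(\<Sum>k\<in>{1..n}. Wc c (X k \<omega>)) \<le> real n * (\<mu> / 4)"
      proof -
        have "(\<Sum>k\<in>{1..n}. Wc c (X k \<omega>)) \<le> 2 * real n * (expectation (\<lambda>\<omega>. Wc c (X 1 \<omega>)) + \<mu> / 16)"
          using N2[of n] n by simp
        also have "\<dots> \<le> 2 * real n * (\<mu> / 8)" using c(3) by (intro mult_left_mono) auto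
        also have "\<dots> = real n * (\<mu> / 4)" by simp
        finally show ?thesis .
      qed
      have "Sdrift X \<mu> n \<omega> = (\<Sum>k\<in>{1..n}. X k \<omega>) - real n * \<mu>" by (simp add: Sdrift_def)
      then show ?thesis using S z w by (simp add: algebra_simps)
    qed
    then show "\<exists>N. \<forall>n\<ge>N. Sdrift X \<mu> n \<omega> \<le> - (\<mu> / 2) * real n" by blast
  qed
qed

end

theorem proposition1:
  fixes M :: "'a measure" and X :: "nat \<Rightarrow> 'a \<Rightarrow> real"
    and \<beta> \<mu> m L :: real
  assumes "prob_space M"
    and "prob_space.indep_vars M (\<lambda>_. borel) X {1..}"
    and "\<And>k. k \<ge> 1 \<Longrightarrow> distr M borel (X k) = distr M borel (X 1)"
    and "integrable M (X 1)"
    and "prob_space.expectation M (X 1) = 0"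
    and "\<beta> > 1"
    and "integrable M (\<lambda>\<omega>. \<bar>X 1 \<omega>\<bar> powr \<beta>)"
    and "\<mu> > 0" and "m > 0" and "L \<ge> 1"
    and "measure M {\<omega>\<in>space M. ereal m < Msup X \<mu> \<omega> \<and> Msup X \<mu> \<omega> \<le> ereal ((L + 1) * m)} > 0"
  shows "(AE \<omega> in M. (\<lambda>n. Dtime (\<lambda>k. Sdrift X \<mu> k \<omega>) L m n) \<longlonglongrightarrow> \<infinity>)
    \<and> (\<forall>n\<ge>1. AE \<omega> in M. Dtime (\<lambda>k. Sdrift X \<mu> k \<omega>) L m n < \<infinity>)
    \<and> (AE \<omega> in M. \<exists>\<^sub>\<infinity>n. Utime (\<lambda>k. Sdrift X \<mu> k \<omega>) L m n = \<infinity>)"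
proof -
  have rwI: "rw M X \<mu>"
  proof (intro rw.intro rw_axioms.intro)
    show "prob_space M" by fact
    show "prob_space.indep_vars M (\<lambda>_. borel) X {1..}" by fact
    show "distr M borel (X k) = distr M borel (X 1)" if "k \<ge> 1" for k using assms(3)[OF that] .
    show "\<mu> > 0" by fact
  qed
  interpret rw M X \<mu> by (rule rwI)
  have drift: "AE \<omega> in M. \<exists>N. \<forall>n\<ge>N. Sdrift X \<mu> n \<omega> \<le> - (\<mu> / 2) * real n"
    by (rule drift_AE[OF assms(4,5,6,7)])
  have Lm: "L * m > 0" using assms(9,10) by simp
  have down: "AE \<omega> in M. \<forall>c a. \<exists>n\<ge>a. Sdrift X \<mu> n \<omega> < c"
    using drift
  proof (rule eventually_mono)
    fix \<omega> assume "\<exists>N. \<forall>n\<ge>N. Sdrift X \<mu> n \<omega> \<le> - (\<mu> / 2) * real n"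
    then obtain N where N: "\<forall>n\<ge>N. Sdrift X \<mu> n \<omega> \<le> - (\<mu> / 2) * real n" by blast
    show "\<forall>c a. \<exists>n\<ge>a. Sdrift X \<mu> n \<omega> < c"
      using down_of_drift(1)[OF assms(8) N] by blast
  qed
  have bdd: "AE \<omega> in M. \<exists>B. \<forall>k. Sdrift X \<mu> k \<omega> \<le> B"
    using drift
  proof (rule eventually_mono)
    fix \<omega> assume "\<exists>N. \<forall>n\<ge>N. Sdrift X \<mu> n \<omega> \<le> - (\<mu> / 2) * real n"
    then obtain N where N: "\<forall>n\<ge>N. Sdrift X \<mu> n \<omega> \<le> - (\<mu> / 2) * real n" by blast
    show "\<exists>B. \<forall>k. Sdrift X \<mu> k \<omega> \<le> B"
      using down_of_drift(2)[OF assms(8) N] by blast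
  qed
  have P1: "AE \<omega> in M. (\<lambda>n. Dtime (\<lambda>k. Sdrift X \<mu> k \<omega>) L m n) \<longlonglongrightarrow> \<infinity>"
    using down
  proof (rule eventually_mono)
    fix \<omega> assume "\<forall>c a. \<exists>n\<ge>a. Sdrift X \<mu> n \<omega> < c"
    then show "(\<lambda>n. Dtime (\<lambda>k. Sdrift X \<mu> k \<omega>) L m n) \<longlonglongrightarrow> \<infinity>"
      by (intro D_tendsto[OF _ Lm]) auto
  qed
  have P2: "\<forall>n\<ge>1. AE \<omega> in M. Dtime (\<lambda>k. Sdrift X \<mu> k \<omega>) L m n < \<infinity>"
  proof (intro allI impI)
    fix n :: nat assume "n \<ge> 1"
    then obtain j where j: "n = Suc j" by (cases n) auto
    show "AE \<omega> in M. Dtime (\<lambda>k. Sdrift X \<mu> k \<omega>) L m n < \<infinity>"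
      using down
    proof (rule eventually_mono)
      fix \<omega> assume "\<forall>c a. \<exists>n\<ge>a. Sdrift X \<mu> n \<omega> < c"
      then obtain k where "Dtime (\<lambda>k. Sdrift X \<mu> k \<omega>) L m (Suc j) = enat k"
        using D_step[OF _ Lm, of "\<lambda>k. Sdrift X \<mu> k \<omega>" j] by auto
      then show "Dtime (\<lambda>k. Sdrift X \<mu> k \<omega>) L m n < \<infinity>" using j by simp
    qed
  qed
  have q: "prob (Rev 0 m) < 1" by (rule q_lt1[OF bdd assms(4,5,9)])
  have P3: "AE \<omega> in M. \<exists>\<^sub>\<infinity>n. Utime (\<lambda>k. Sdrift X \<mu> k \<omega>) L m n = \<infinity>"
    by (rule partC[OF assms(9) q])
  show ?thesis using P1 P2 P3 by blast
qed


end
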